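(* Let $M\subseteq H\subseteq F\subseteq\omega$ be $\Pi^1_1$ sets. Then there exists a computable function $g$ such that for every $p\in\omega$, $g(p)$ is an $\iota$-index of a c.e. effective quasi-Polish space $X=\iota(g(p))$ such that: $X$ is metrizable if $p\in M$; $X$ is Hausdorff but not metrizable if $p\in H\setminus M$; $X$ is $T_1$ but not Hausdorff if $p\in F\setminus H$; and $X$ is not $T_1$ if $p\notin F$.
   Context: Let $(W_n)$ be a standard numbering of c.e. subsets of $\omega$, $V_n=\{(i,j)\mid\langle i,j\rangle\in W_n\}$, and $t$ a computable function with $V_{t(n)}$ the transitive closure of $V_n$. For a transitive relation $\prec$ on $\omega$, an ideal is a non-empty lower, directed subset of $\omega$; $\mathcal{I}(\prec)$ is the space of ideals with topology generated by $[k]_\prec=\{I\mid k\in I\}$, an effective space with basic opens numbered by $k$. The numbering $\iota$ is defined by $\iota(n)=\mathcal{I}(V_{t(n)})$; an $\iota$-index of $X$ is an $n$ with $X=\iota(n)$. Every $\iota(n)$ is an effective quasi-Polish space; it is c.e. (overt) if $\{k\mid[k]_{V_{t(n)}}\neq\emptyset\}$ is c.e. *)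

theory Defs
  imports "HOL-Analysis.Analysis" "HOL-Library.Nat_Bijection"
begin

datatype recf = Z | S | Id nat | Cn recf "recf list" | Pr recf recf | Mn recf

inductive eval :: "recf \<Rightarrow> nat list \<Rightarrow> nat \<Rightarrow> bool" where
  eval_Z: "eval Z xs 0"
| eval_S: "eval S (x # xs) (Suc x)"
| eval_Id: "i < length xs \<Longrightarrow> eval (Id i) xs (xs ! i)"
| eval_Cn: "list_all2 (\<lambda>g y. eval g xs y) gs ys \<Longrightarrow> eval f ys z \<Longrightarrow> eval (Cn f gs) xs z"
| eval_Pr0: "eval f xs y \<Longrightarrow> eval (Pr f g) (0 # xs) y"
| eval_PrS: "eval (Pr f g) (n # xs) y \<Longrightarrow> eval g (n # y # xs) z \<Longrightarrow> eval (Pr f g) (Suc n # xs) z"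
| eval_Mn: "eval f (n # xs) 0 \<Longrightarrow> (\<forall>m<n. \<exists>y. eval f (m # xs) (Suc y)) \<Longrightarrow> eval (Mn f) xs n"
monos list_all2_mono

fun code :: "recf \<Rightarrow> nat" where
  "code Z = prod_encode (0, 0)"
| "code S = prod_encode (1, 0)"
| "code (Id i) = prod_encode (2, i)"
| "code (Cn f gs) = prod_encode (3, prod_encode (code f, list_encode (map code gs)))"
| "code (Pr f g) = prod_encode (4, prod_encode (code f, code g))"
| "code (Mn f) = prod_encode (5, code f)"

definition computable :: "(nat \<Rightarrow> nat) \<Rightarrow> bool" where
  "computable f \<longleftrightarrow> (\<exists>r. \<forall>x. eval r [x] (f x))"

definition W :: "nat \<Rightarrow> nat set" where
  "W n = {x. \<exists>r y. code r = n \<and> eval r [x] y}"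

definition ce :: "nat set \<Rightarrow> bool" where
  "ce A \<longleftrightarrow> (\<exists>n. A = W n)"

text \<open>Pi^1_1 subsets of omega (Kleene normal form with a computable matrix).\<close>
definition pi11 :: "nat set \<Rightarrow> bool" where
  "pi11 A \<longleftrightarrow> (\<exists>R. computable R \<and>
     (\<forall>n. n \<in> A \<longleftrightarrow> (\<forall>f::nat \<Rightarrow> nat. \<exists>m. R (prod_encode (n, list_encode (map f [0..<m]))) = 0)))"

definition V :: "nat \<Rightarrow> (nat \<times> nat) set" where
  "V n = {(i, j). prod_encode (i, j) \<in> W n}"

definition is_ideal :: "(nat \<times> nat) set \<Rightarrow> nat set \<Rightarrow> bool" where
  "is_ideal R I \<longleftrightarrow> I \<noteq> {}
     \<and> (\<forall>k\<in>I. \<forall>j. (j, k) \<in> R \<longrightarrow> j \<in> I)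
     \<and> (\<forall>a\<in>I. \<forall>b\<in>I. \<exists>c\<in>I. (a, c) \<in> R \<and> (b, c) \<in> R)"

definition basic_open :: "(nat \<times> nat) set \<Rightarrow> nat \<Rightarrow> nat set set" where
  "basic_open R k = {I. is_ideal R I \<and> k \<in> I}"

definition ideal_space :: "(nat \<times> nat) set \<Rightarrow> nat set topology" where
  "ideal_space R = topology_generated_by (range (basic_open R))"

text \<open>iota n = I(V_{t(n)}) where V_{t(n)} is the transitive closure of V_n.\<close>
definition iota :: "nat \<Rightarrow> nat set topology" where
  "iota n = ideal_space ((V n)\<^sup>+)"

definition iota_ce :: "nat \<Rightarrow> bool" where
  "iota_ce n \<longleftrightarrow> ce {k. basic_open ((V n)\<^sup>+) k \<noteq> {}}"

end

theory Submission
  imports Defs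
begin

lemma ideal_topspace: "topspace (ideal_space R) = {I. is_ideal R I}"
  unfolding ideal_space_def basic_open_def is_ideal_def by auto

lemma open_basic: "openin (ideal_space R) (basic_open R k)"
  unfolding ideal_space_def by (rule topology_generated_by_Basis) simp

lemma basic_open_mono: "is_ideal R I \<Longrightarrow> I \<in> basic_open R k \<Longrightarrow> k \<in> I"
  unfolding basic_open_def by simp

lemma open_nbhd0:
  assumes "openin (ideal_space R) U" "I \<in> U"
  shows "\<exists>k. I \<in> basic_open R k \<and> basic_open R k \<subseteq> U"
proof -
  have "generate_topology_on (range (basic_open R)) U"
    using assms(1) unfolding ideal_space_def by (rule openin_topology_generated_by)
  then show ?thesis using assms(2)
  proof (induction arbitrary: I)
    case Empty then show ?case by simp
  next
    case (Int a b)
    then obtain k1 k2 where k: "I \<in> basic_open R k1" "basic_open R k1 \<subseteq> a"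
      "I \<in> basic_open R k2" "basic_open R k2 \<subseteq> b"
      by blast
    then have I: "is_ideal R I" "k1 \<in> I" "k2 \<in> I" unfolding basic_open_def by auto
    then obtain c where c: "c \<in> I" "(k1, c) \<in> R" "(k2, c) \<in> R"
      unfolding is_ideal_def by blast
    have "basic_open R c \<subseteq> basic_open R k1 \<inter> basic_open R k2"
      using c unfolding basic_open_def is_ideal_def by blast
    moreover have "I \<in> basic_open R c" using I c unfolding basic_open_def by simp
    ultimately show ?case using k by blast
  next
    case (UN K)
    then obtain k where "k \<in> K" "I \<in> k" by blast
    then obtain k' where "I \<in> basic_open R k'" "basic_open R k' \<subseteq> k" using UN.IH by blast
    then show ?case using \<open>k \<in> K\<close> by blast
  next
    case (Basis s)
    then obtain k where "s = basic_open R k" by blast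
    then show ?case using Basis.prems by blast
  qed
qed

lemma open_nbhd:
  assumes "openin (ideal_space R) U" "I \<in> U"
  shows "\<exists>k\<in>I. basic_open R k \<subseteq> U"
proof -
  obtain k where k: "I \<in> basic_open R k" "basic_open R k \<subseteq> U" using open_nbhd0[OF assms] by blast
  then have "k \<in> I" by (simp add: basic_open_def)
  then show ?thesis using k(2) by blast
qed

lemma ideal_in_open_is_ideal: "openin (ideal_space R) U \<Longrightarrow> I \<in> U \<Longrightarrow> is_ideal R I"
  using openin_subset[of "ideal_space R" U] ideal_topspace[of R] by blast

lemma t1_ideal:
  assumes "\<And>I J. is_ideal R I \<Longrightarrow> is_ideal R J \<Longrightarrow> I \<subseteq> J \<Longrightarrow> I = J"
  shows "t1_space (ideal_space R)"
  unfolding t1_space_def ideal_topspace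
proof (intro ballI impI)
  fix I J assume I: "I \<in> {I. is_ideal R I}" and J: "J \<in> {I. is_ideal R I}" and ne: "I \<noteq> J"
  then have "\<not> I \<subseteq> J" using assms by blast
  then obtain k where "k \<in> I" "k \<notin> J" by blast
  moreover have "openin (ideal_space R) (basic_open R k)" by (rule open_basic)
  ultimately show "\<exists>U. openin (ideal_space R) U \<and> I \<in> U \<and> J \<notin> U"
    using I unfolding basic_open_def by blast
qed

lemma not_t1_ideal:
  assumes "is_ideal R I" "is_ideal R J" "I \<subseteq> J" "I \<noteq> J"
  shows "\<not> t1_space (ideal_space R)"
proof
  assume "t1_space (ideal_space R)"
  then obtain U where U: "openin (ideal_space R) U" "I \<in> U" "J \<notin> U"
    using assms unfolding t1_space_def ideal_topspace by blast
  then obtain k where "k \<in> I" "basic_open R k \<subseteq> U" using open_nbhd by blast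
  then have "J \<in> basic_open R k" using assms unfolding basic_open_def by auto
  then show False using U \<open>basic_open R k \<subseteq> U\<close> by blast
qed

definition ub :: "(nat \<times> nat) set \<Rightarrow> nat \<Rightarrow> nat \<Rightarrow> bool" where
  "ub R k k' \<longleftrightarrow> (\<exists>c. (k, c) \<in> R \<and> (k', c) \<in> R)"

lemma ideal_ub: "is_ideal R L \<Longrightarrow> k \<in> L \<Longrightarrow> k' \<in> L \<Longrightarrow> ub R k k'"
  unfolding is_ideal_def ub_def by blast

lemma sep_ideal:
  assumes "k \<in> I" "k' \<in> J" "is_ideal R I" "is_ideal R J" "\<not> ub R k k'"
  shows "\<exists>U V. openin (ideal_space R) U \<and> openin (ideal_space R) V \<and> I \<in> U \<and> J \<in> V \<and> disjnt U V"
proof -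
  have "disjnt (basic_open R k) (basic_open R k')"
    unfolding disjnt_def
  proof (rule ccontr)
    assume "basic_open R k \<inter> basic_open R k' \<noteq> {}"
    then obtain L where "L \<in> basic_open R k" "L \<in> basic_open R k'" by blast
    then have "is_ideal R L" "k \<in> L" "k' \<in> L" unfolding basic_open_def by auto
    then show False using assms(5) ideal_ub by metis
  qed
  moreover have "I \<in> basic_open R k" "J \<in> basic_open R k'"
    using assms unfolding basic_open_def by auto
  ultimately show ?thesis using open_basic by blast
qed

lemma not_haus_ideal:
  assumes "is_ideal R I" "is_ideal R J" "I \<noteq> J"
    "\<And>k k'. k \<in> I \<Longrightarrow> k' \<in> J \<Longrightarrow> \<exists>L. is_ideal R L \<and> k \<in> L \<and> k' \<in> L"
  shows "\<not> Hausdorff_space (ideal_space R)"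
proof
  assume "Hausdorff_space (ideal_space R)"
  moreover have "I \<in> topspace (ideal_space R)" "J \<in> topspace (ideal_space R)"
    using assms(1,2) by (auto simp: ideal_topspace)
  ultimately obtain U V where UV: "openin (ideal_space R) U" "openin (ideal_space R) V" "I \<in> U" "J \<in> V" "disjnt U V"
    using assms(3) unfolding Hausdorff_space_def by metis
  obtain k where k: "k \<in> I" "basic_open R k \<subseteq> U" using open_nbhd UV by blast
  obtain k' where k': "k' \<in> J" "basic_open R k' \<subseteq> V" using open_nbhd UV by blast
  obtain L where "is_ideal R L" "k \<in> L" "k' \<in> L" using assms(4) k k' by blast
  then have "L \<in> U \<inter> V" using k k' unfolding basic_open_def by blast
  then show False using UV(5) unfolding disjnt_def by blast
qed

lemma discrete_ideal:
  assumes "\<And>I. is_ideal R I \<Longrightarrow> \<exists>k. basic_open R k = {I}"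
  shows "metrizable_space (ideal_space R)"
proof -
  have "discrete_topology (topspace (ideal_space R)) = ideal_space R"
    unfolding discrete_topology_unique
    using assms open_basic ideal_topspace by (metis mem_Collect_eq)
  then show ?thesis by (metis metrizable_space_discrete_topology)
qed

definition pf :: "nat list \<Rightarrow> nat list \<Rightarrow> bool" where
  "pf s t \<longleftrightarrow> take (length s) t = s"
definition sp :: "nat list \<Rightarrow> nat list \<Rightarrow> bool" where
  "sp s t \<longleftrightarrow> pf s t \<and> s \<noteq> t"

lemma pf_length: "pf s t \<Longrightarrow> length s \<le> length t"
  unfolding pf_def by (metis length_take min.absorb_iff1 min.commute)

lemma sp_length: "sp s t \<Longrightarrow> length s < length t"
  unfolding sp_def using pf_length by (metis order_le_less pf_def take_all)

lemma pf_trans: "pf a b \<Longrightarrow> pf b c \<Longrightarrow> pf a c"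
  unfolding pf_def by (metis pf_def pf_length min.absorb1 take_take)

lemma sp_trans: "sp a b \<Longrightarrow> sp b c \<Longrightarrow> sp a c"
  using sp_length pf_trans unfolding sp_def by (metis less_irrefl sp_def sp_length less_trans)

lemma pf_sp_trans: "pf a b \<Longrightarrow> sp b c \<Longrightarrow> sp a c"
  by (metis pf_length pf_trans sp_def sp_length not_le)

lemma pf_refl[simp]: "pf a a" unfolding pf_def by simp

lemma pf_comparable: "pf a c \<Longrightarrow> pf b c \<Longrightarrow> pf a b \<or> pf b a"
  unfolding pf_def by (metis min.commute min_def take_take)

lemma pf_take: "pf (take n s) s" unfolding pf_def by (simp add: min_def)

lemma pf_map_upt: "a \<le> b \<Longrightarrow> pf (map f [0..<a]) (map f [0..<b])"
  unfolding pf_def by (simp add: take_map)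

lemma sp_map_upt: "a < b \<Longrightarrow> sp (map f [0..<a]) (map f [0..<b])"
proof -
  assume ab: "a < b"
  then have "pf (map f [0..<a]) (map f [0..<b])" by (intro pf_map_upt) simp
  moreover have "map f [0..<a] \<noteq> map f [0..<b]" using ab by (metis length_map length_upt diff_zero less_irrefl)
  ultimately show ?thesis unfolding sp_def by simp
qed

lemma pf_eq_take: "pf s t \<Longrightarrow> s = take (length s) t"
  unfolding pf_def by simp

lemma ideal_dir: "is_ideal R I \<Longrightarrow> a \<in> I \<Longrightarrow> b \<in> I \<Longrightarrow> \<exists>c\<in>I. (a, c) \<in> R \<and> (b, c) \<in> R"
  unfolding is_ideal_def by blast
lemma ideal_lower: "is_ideal R I \<Longrightarrow> k \<in> I \<Longrightarrow> (j, k) \<in> R \<Longrightarrow> j \<in> I"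
  unfolding is_ideal_def by blast
lemma ideal_ne: "is_ideal R I \<Longrightarrow> I \<noteq> {}"
  unfolding is_ideal_def by blast

lemma path_ideal_gen:
  fixes emb :: "nat list \<Rightarrow> nat" and G :: "nat list \<Rightarrow> bool" and R :: "(nat \<times> nat) set"
  assumes edge: "\<And>s t. (emb s, emb t) \<in> R \<longleftrightarrow> sp s t \<and> G t"
    and pred: "\<And>j t. (j, emb t) \<in> R \<Longrightarrow> j \<in> range emb"
    and Gf: "\<And>k. G (map f [0..<k])"
  shows "is_ideal R (range (\<lambda>k. emb (map f [0..<k])))"
  unfolding is_ideal_def
proof (intro conjI ballI allI impI)
  show "range (\<lambda>k. emb (map f [0..<k])) \<noteq> {}" by simp
next
  fix k j assume k: "k \<in> range (\<lambda>k. emb (map f [0..<k]))" and j: "(j, k) \<in> R"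
  then obtain n where n: "k = emb (map f [0..<n])" by blast
  with j obtain s where s: "j = emb s" using pred by blast
  with j n have "sp s (map f [0..<n])" using edge by blast
  then have "s = map f [0..<length s]"
    by (metis pf_eq_take sp_def sp_length length_map length_upt minus_nat.diff_0 take_map take_upt
        add_0 less_imp_le_nat)
  then show "j \<in> range (\<lambda>k. emb (map f [0..<k]))" using s by (metis rangeI)
next
  fix a b assume a: "a \<in> range (\<lambda>k. emb (map f [0..<k]))" and b: "b \<in> range (\<lambda>k. emb (map f [0..<k]))"
  then obtain n1 n2 where n: "a = emb (map f [0..<n1])" "b = emb (map f [0..<n2])" by blast
  let ?N = "Suc (max n1 n2)"
  have "(a, emb (map f [0..<?N])) \<in> R" "(b, emb (map f [0..<?N])) \<in> R"
    unfolding n edge using sp_map_upt[of n1 ?N f] sp_map_upt[of n2 ?N f] Gf[of ?N] by (simp_all del: upt_Suc)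
  then show "\<exists>c\<in>range (\<lambda>k. emb (map f [0..<k])). (a, c) \<in> R \<and> (b, c) \<in> R" by blast
qed

lemma ideal_path_gen:
  fixes emb :: "nat list \<Rightarrow> nat" and G :: "nat list \<Rightarrow> bool" and R :: "(nat \<times> nat) set"
  assumes edge: "\<And>s t. (emb s, emb t) \<in> R \<longleftrightarrow> sp s t \<and> G t"
    and Gpre: "\<And>s t. G t \<Longrightarrow> pf s t \<Longrightarrow> G s"
    and I: "is_ideal R I" and sub: "I \<subseteq> range emb"
  shows "\<exists>f. (\<forall>k. G (map f [0..<k])) \<and> I = range (\<lambda>k. emb (map f [0..<k]))"
proof -
  define S where "S = {s. emb s \<in> I}"
  have "I \<noteq> {}" using I by (rule ideal_ne)
  then obtain x where "x \<in> I" by blast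
  then obtain s0 where "x = emb s0" using sub by blast
  then have ne: "S \<noteq> {}" unfolding S_def using \<open>x \<in> I\<close> by blast
  have ext: "\<exists>t\<in>S. sp s t \<and> G t" if "s \<in> S" for s
  proof -
    have "emb s \<in> I" using that unfolding S_def by simp
    then obtain c where c: "c \<in> I" "(emb s, c) \<in> R" using ideal_dir[OF I] by blast
    then obtain t where t: "c = emb t" "t \<in> S" using sub unfolding S_def by auto
    then have "sp s t \<and> G t" using c(2) edge by simp
    then show ?thesis using t by blast
  qed
  have comp: "pf s s' \<or> pf s' s" if "s \<in> S" "s' \<in> S" for s s'
  proof -
    have "emb s \<in> I" "emb s' \<in> I" using that unfolding S_def by simp_all
    then obtain c where c: "c \<in> I" "(emb s, c) \<in> R" "(emb s', c) \<in> R"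
      using ideal_dir[OF I] by blast
    then obtain t where t: "c = emb t" using sub by auto
    then have "sp s t" "sp s' t" using c edge by simp_all
    then have "pf s t" "pf s' t" unfolding sp_def by simp_all
    then show ?thesis by (rule pf_comparable)
  qed
  have Gall: "G s" if s: "s \<in> S" for s
  proof -
    obtain t where "t \<in> S" "sp s t" "G t" using ext[OF s] by blast
    then show ?thesis using Gpre unfolding sp_def by blast
  qed
  have lower: "s \<in> S" if "t \<in> S" "sp s t" "G t" for s t
  proof -
    have "(emb s, emb t) \<in> R" using edge that(2,3) by simp
    moreover have "emb t \<in> I" using that(1) S_def by simp
    ultimately have "emb s \<in> I" using ideal_lower[OF I] by blast
    then show ?thesis unfolding S_def by simp
  qed
  have long: "\<exists>s\<in>S. n \<le> length s" for n
  proof (induction n)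
    case 0 then show ?case using ne by auto
  next
    case (Suc n)
    then obtain s where "s \<in> S" "n \<le> length s" by blast
    then obtain t where "t \<in> S" "sp s t" using ext by blast
    then have "length s < length t" by (intro sp_length)
    then have "Suc n \<le> length t" using \<open>n \<le> length s\<close> by simp
    then show ?case using \<open>t \<in> S\<close> by blast
  qed
  define f where "f i = (SOME s. s \<in> S \<and> i < length s) ! i" for i
  have fS: "(SOME s. s \<in> S \<and> i < length s) \<in> S \<and> i < length (SOME s. s \<in> S \<and> i < length s)" for i
  proof -
    obtain s where "s \<in> S" "Suc i \<le> length s" using long[of "Suc i"] by blast
    then have "\<exists>s. s \<in> S \<and> i < length s" by auto
    then show ?thesis by (rule someI_ex)
  qed
  have fs: "map f [0..<length s] = s" if "s \<in> S" for s
  proof (rule nth_equalityI)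
    show "length (map f [0..<length s]) = length s" by simp
    fix i assume "i < length (map f [0..<length s])"
    then have i: "i < length s" by simp
    let ?t = "SOME s. s \<in> S \<and> i < length s"
    have t: "?t \<in> S" "i < length ?t" using fS[of i] by auto
    have "?t ! i = s ! i"
    proof (cases "pf ?t s")
      case True
      then have "?t = take (length ?t) s" by (rule pf_eq_take)
      then have "?t ! i = take (length ?t) s ! i" by simp
      also have "\<dots> = s ! i" using t(2) by (intro nth_take) simp
      finally show ?thesis .
    next
      case False
      then have "pf s ?t" using comp[OF t(1) that] by blast
      then have "s = take (length s) ?t" by (rule pf_eq_take)
      then have "s ! i = take (length s) ?t ! i" by simp
      also have "\<dots> = ?t ! i" using i by (intro nth_take) simp
      finally show ?thesis by simp
    qed
    then show "map f [0..<length s] ! i = s ! i" using i by (simp add: f_def)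
  qed
  have inS: "map f [0..<n] \<in> S" for n
  proof -
    obtain s where s: "s \<in> S" "n \<le> length s" using long by blast
    have "take n (map f [0..<length s]) = map f [0..<n]" using s(2) by (simp add: take_map min_def)
    then have e: "map f [0..<n] = take n s" using fs[OF s(1)] by simp
    show ?thesis
    proof (cases "n = length s")
      case True then show ?thesis using s fs by simp
    next
      case False
      have "length (take n s) \<noteq> length s" using s(2) False by simp
      then have "sp (take n s) s" unfolding sp_def using pf_take by auto
      then show ?thesis using lower[OF s(1)] Gall[OF s(1)] e by simp
    qed
  qed
  have "I = range (\<lambda>k. emb (map f [0..<k]))"
  proof
    show "I \<subseteq> range (\<lambda>k. emb (map f [0..<k]))"
    proof
      fix x assume "x \<in> I"
      then obtain s where s: "s \<in> S" "x = emb s" unfolding S_def using sub by blast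
      then have "x = emb (map f [0..<length s])" using fs[OF s(1)] by simp
      then show "x \<in> range (\<lambda>k. emb (map f [0..<k]))" by blast
    qed
    show "range (\<lambda>k. emb (map f [0..<k])) \<subseteq> I"
    proof
      fix x assume "x \<in> range (\<lambda>k. emb (map f [0..<k]))"
      then obtain n where "x = emb (map f [0..<n])" by blast
      then show "x \<in> I" using inS[of n] unfolding S_def by simp
    qed
  qed
  moreover have "\<forall>k. G (map f [0..<k])" using inS Gall by blast
  ultimately show ?thesis by blast
qed

declare list_encode_eq[simp]

abbreviation eA :: "nat list \<Rightarrow> nat" where "eA s \<equiv> prod_encode (0, list_encode s)"
abbreviation fA :: "nat \<Rightarrow> nat list \<Rightarrow> nat" where "fA m s \<equiv> prod_encode (2, prod_encode (m, list_encode s))"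
abbreviation bA :: "nat \<Rightarrow> nat list \<Rightarrow> nat" where "bA m s \<equiv> prod_encode (3, prod_encode (m, list_encode s))"
abbreviation e1 :: "nat list \<Rightarrow> nat" where "e1 s \<equiv> prod_encode (4, list_encode s)"
abbreviation e2 :: "nat list \<Rightarrow> nat" where "e2 s \<equiv> prod_encode (5, list_encode s)"
abbreviation bB :: "nat list \<Rightarrow> nat" where "bB s \<equiv> prod_encode (6, list_encode s)"
abbreviation eC :: "nat list \<Rightarrow> nat" where "eC s \<equiv> prod_encode (7, list_encode s)"
abbreviation tp :: "nat \<Rightarrow> nat" where "tp d \<equiv> prod_encode (8, d)"

definition good :: "(nat \<Rightarrow> nat) \<Rightarrow> nat \<Rightarrow> nat list \<Rightarrow> bool" where
  "good R p t \<longleftrightarrow> (\<forall>i\<le>length t. R (prod_encode (p, list_encode (take i t))) \<noteq> 0)"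

definition ipath :: "(nat \<Rightarrow> nat) \<Rightarrow> nat \<Rightarrow> (nat \<Rightarrow> nat) \<Rightarrow> bool" where
  "ipath R p f \<longleftrightarrow> (\<forall>k. R (prod_encode (p, list_encode (map f [0..<k]))) \<noteq> 0)"

lemma good_pre: "good R p t \<Longrightarrow> pf s t \<Longrightarrow> good R p s"
  unfolding good_def
proof (intro allI impI)
  fix i assume g: "\<forall>i\<le>length t. R (prod_encode (p, list_encode (take i t))) \<noteq> 0"
    and st: "pf s t" and i: "i \<le> length s"
  have l: "length s \<le> length t" using st by (rule pf_length)
  have "take i s = take i t" using st i unfolding pf_def by (metis min.absorb1 take_take)
  then show "R (prod_encode (p, list_encode (take i s))) \<noteq> 0" using g i l by simp
qed

lemma path_good: "ipath R p f \<longleftrightarrow> (\<forall>k. good R p (map f [0..<k]))"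
  unfolding ipath_def good_def
proof (intro iffI allI impI)
  fix k i assume "\<forall>k. R (prod_encode (p, list_encode (map f [0..<k]))) \<noteq> 0"
  moreover have "take i (map f [0..<k]) = map f [0..<min i k]"
    by (cases "i \<le> k") (simp_all add: take_map min_def take_upt)
  ultimately show "R (prod_encode (p, list_encode (take i (map f [0..<k])))) \<noteq> 0"
    by metis
next
  fix k assume "\<forall>k. \<forall>i\<le>length (map f [0..<k]). R (prod_encode (p, list_encode (take i (map f [0..<k])))) \<noteq> 0"
  then have "k \<le> length (map f [0..<k]) \<Longrightarrow> R (prod_encode (p, list_encode (take k (map f [0..<k])))) \<noteq> 0"
    by blast
  then have "R (prod_encode (p, list_encode (take k (map f [0..<k])))) \<noteq> 0" by simp
  then show "R (prod_encode (p, list_encode (map f [0..<k]))) \<noteq> 0" by simp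
qed

lemma sp_pf_trans: "sp a b \<Longrightarrow> pf b c \<Longrightarrow> pf a c"
  unfolding sp_def using pf_trans by blast

inductive_set RL :: "(nat \<Rightarrow> nat) \<Rightarrow> (nat \<Rightarrow> nat) \<Rightarrow> (nat \<Rightarrow> nat) \<Rightarrow> nat \<Rightarrow> (nat \<times> nat) set"
  for R1 R2 R3 :: "nat \<Rightarrow> nat" and p :: nat where
  eAe: "sp s t \<Longrightarrow> good R1 p t \<Longrightarrow> (eA s, eA t) \<in> RL R1 R2 R3 p"
| fAf: "sp s t \<Longrightarrow> good R1 p t \<Longrightarrow> (fA m s, fA m t) \<in> RL R1 R2 R3 p"
| fAb: "pf s t \<Longrightarrow> (fA m s, bA m t) \<in> RL R1 R2 R3 p"
| eAb: "pf s (take m t) \<Longrightarrow> (eA s, bA m t) \<in> RL R1 R2 R3 p"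
| bAb: "(bA m t, bA m t) \<in> RL R1 R2 R3 p"
| e1e: "sp s t \<Longrightarrow> good R2 p t \<Longrightarrow> (e1 s, e1 t) \<in> RL R1 R2 R3 p"
| e2e: "sp s t \<Longrightarrow> good R2 p t \<Longrightarrow> (e2 s, e2 t) \<in> RL R1 R2 R3 p"
| e1b: "pf s t \<Longrightarrow> (e1 s, bB t) \<in> RL R1 R2 R3 p"
| e2b: "pf s t \<Longrightarrow> (e2 s, bB t) \<in> RL R1 R2 R3 p"
| bBb: "(bB t, bB t) \<in> RL R1 R2 R3 p"
| eCe: "sp s t \<Longrightarrow> good R3 p t \<Longrightarrow> (eC s, eC t) \<in> RL R1 R2 R3 p"
| eCt: "(eC s, tp d) \<in> RL R1 R2 R3 p"
| tpt: "(tp d, tp d) \<in> RL R1 R2 R3 p"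
| jj: "t = 1 \<or> 9 \<le> t \<Longrightarrow> (prod_encode (t, d), prod_encode (t, d)) \<in> RL R1 R2 R3 p"

definition isB :: "nat \<Rightarrow> bool" where
  "isB b \<longleftrightarrow> fst (prod_decode b) = 3 \<or> fst (prod_decode b) = 6 \<or> fst (prod_decode b) = 8 \<or> fst (prod_decode b) = 1 \<or> 9 \<le> fst (prod_decode b)"

lemma isB_pe[simp]: "isB (prod_encode (t, d)) \<longleftrightarrow> t = 3 \<or> t = 6 \<or> t = 8 \<or> t = 1 \<or> 9 \<le> t"
  unfolding isB_def by simp

lemma nat_decomp: obtains t d where "b = prod_encode (t, d)"
  by (metis prod_decode_inverse surj_pair)

lemma nat_decomp2: obtains m s where "d = prod_encode (m, list_encode s)"
  by (metis list_decode_inverse prod_decode_inverse surj_pair)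

lemma nat_decomp1: obtains s where "d = list_encode s"
  by (metis list_decode_inverse)

context
  fixes R1 R2 R3 :: "nat \<Rightarrow> nat" and p :: nat
begin

abbreviation "Rl \<equiv> RL R1 R2 R3 p"

lemma RL_trans: "trans Rl"
proof (rule transI)
  fix x y z assume a: "(x, y) \<in> Rl" and b: "(y, z) \<in> Rl"
  from a show "(x, z) \<in> Rl"
  proof cases
    case (eAe s t) from b show ?thesis
      by cases (use eAe in \<open>auto intro: RL.intros sp_trans sp_pf_trans\<close>)
  next
    case (fAf s t m) from b show ?thesis
      by cases (use fAf in \<open>auto intro: RL.intros sp_trans sp_pf_trans\<close>)
  next
    case (fAb s t m) from b show ?thesis by cases (use fAb in \<open>auto intro: RL.intros\<close>)
  next
    case (eAb s m t) from b show ?thesis by cases (use eAb in \<open>auto intro: RL.intros\<close>)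
  next
    case (bAb m t) from b show ?thesis by cases (use bAb in \<open>auto intro: RL.intros\<close>)
  next
    case (e1e s t) from b show ?thesis
      by cases (use e1e in \<open>auto intro: RL.intros sp_trans sp_pf_trans\<close>)
  next
    case (e2e s t) from b show ?thesis
      by cases (use e2e in \<open>auto intro: RL.intros sp_trans sp_pf_trans\<close>)
  next
    case (e1b s t) from b show ?thesis by cases (use e1b in \<open>auto intro: RL.intros\<close>)
  next
    case (e2b s t) from b show ?thesis by cases (use e2b in \<open>auto intro: RL.intros\<close>)
  next
    case (bBb t) from b show ?thesis by cases (use bBb in \<open>auto intro: RL.intros\<close>)
  next
    case (eCe s t) from b show ?thesis
      by cases (use eCe in \<open>auto intro: RL.intros sp_trans sp_pf_trans\<close>)
  next
    case (eCt s d) from b show ?thesis by cases (use eCt in \<open>auto intro: RL.intros\<close>)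
  next
    case (tpt d) from b show ?thesis by cases (use tpt in \<open>auto intro: RL.intros\<close>)
  next
    case (jj t d) from b show ?thesis by cases (use jj in \<open>auto intro: RL.intros\<close>)
  qed
qed

lemma trancl_Rl: "Rl\<^sup>+ = Rl"
  using RL_trans by simp

lemma isB_max: "isB b \<Longrightarrow> (b, c) \<in> Rl \<Longrightarrow> c = b"
  by (erule RL.cases) auto

lemma isB_refl: assumes "isB b" shows "(b, b) \<in> Rl"
proof -
  obtain t d where b: "b = prod_encode (t, d)" by (rule nat_decomp)
  consider "t = 3" | "t = 6" | "t = 8" | "t = 1 \<or> 9 \<le> t" using assms b by auto
  then show ?thesis
  proof cases
    case 1
    obtain m s where "d = prod_encode (m, list_encode s)" by (rule nat_decomp2)
    then show ?thesis using 1 b by (simp add: RL.bAb)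
  next
    case 2
    obtain s where "d = list_encode s" by (rule nat_decomp1)
    then show ?thesis using 2 b by (simp add: RL.bBb)
  next
    case 3 then show ?thesis using b by (simp add: RL.tpt)
  next
    case 4 then show ?thesis using b by (simp add: RL.jj)
  qed
qed

definition Dn :: "nat \<Rightarrow> nat set" where "Dn b = {k. (k, b) \<in> Rl}"

lemma ideal_D: assumes "isB b" shows "is_ideal Rl (Dn b)"
  unfolding is_ideal_def
proof (intro conjI ballI allI impI)
  show "Dn b \<noteq> {}" using isB_refl[OF assms] unfolding Dn_def by blast
next
  fix k j assume "k \<in> Dn b" "(j, k) \<in> Rl"
  then show "j \<in> Dn b" using RL_trans unfolding Dn_def trans_def by blast
next
  fix a c assume "a \<in> Dn b" "c \<in> Dn b"
  then show "\<exists>e\<in>Dn b. (a, e) \<in> Rl \<and> (c, e) \<in> Rl"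
    using isB_refl[OF assms] unfolding Dn_def by blast
qed

lemma ideal_with_B: assumes "is_ideal Rl I" "b \<in> I" "isB b" shows "I = Dn b"
proof
  show "I \<subseteq> Dn b"
  proof
    fix k assume "k \<in> I"
    then obtain c where c: "c \<in> I" "(k, c) \<in> Rl" "(b, c) \<in> Rl" using ideal_dir[OF assms(1) _ assms(2)] by blast
    then have "c = b" using isB_max[OF assms(3)] by blast
    then show "k \<in> Dn b" using c unfolding Dn_def by simp
  qed
  show "Dn b \<subseteq> I"
    using ideal_lower[OF assms(1) assms(2)] unfolding Dn_def by blast
qed

lemma basic_D: assumes "isB b" shows "basic_open Rl b = {Dn b}"
proof -
  have "b \<in> Dn b" using isB_refl[OF assms] unfolding Dn_def by simp
  then show ?thesis using ideal_D[OF assms] ideal_with_B[OF _ _ assms]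
    unfolding basic_open_def by blast
qed

lemma live: "\<exists>b. isB b \<and> (k, b) \<in> Rl"
proof -
  obtain t d where k: "k = prod_encode (t, d)" by (rule nat_decomp)
  consider "t = 0" | "t = 2" | "t = 4" | "t = 5" | "t = 7" | "isB k" using k by fastforce
  then show ?thesis
  proof cases
    case 1
    obtain s where "d = list_encode s" by (rule nat_decomp1)
    then have "(k, bA (length s) s) \<in> Rl" using 1 k by (simp add: RL.eAb)
    then show ?thesis by (intro exI[of _ "bA (length s) s"]) simp
  next
    case 2
    obtain m s where "d = prod_encode (m, list_encode s)" by (rule nat_decomp2)
    then have "(k, bA m s) \<in> Rl" using 2 k by (simp add: RL.fAb)
    then show ?thesis by (intro exI[of _ "bA m s"]) simp
  next
    case 3
    obtain s where "d = list_encode s" by (rule nat_decomp1)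
    then have "(k, bB s) \<in> Rl" using 3 k by (simp add: RL.e1b)
    then show ?thesis by (intro exI[of _ "bB s"]) simp
  next
    case 4
    obtain s where "d = list_encode s" by (rule nat_decomp1)
    then have "(k, bB s) \<in> Rl" using 4 k by (simp add: RL.e2b)
    then show ?thesis by (intro exI[of _ "bB s"]) simp
  next
    case 5
    obtain s where "d = list_encode s" by (rule nat_decomp1)
    then have "(k, tp 0) \<in> Rl" using 5 k by (simp add: RL.eCt)
    then show ?thesis by (intro exI[of _ "tp 0"]) simp
  next
    case 6 then show ?thesis using isB_refl by blast
  qed
qed

lemma basic_nonempty: "basic_open Rl k \<noteq> {}"
proof -
  obtain b where b: "isB b" "(k, b) \<in> Rl" using live by blast
  then have "Dn b \<in> basic_open Rl k" using ideal_D[OF b(1)] unfolding basic_open_def Dn_def by simp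
  then show ?thesis by blast
qed

lemma notB_cases:
  assumes "\<not> isB k"
  obtains s where "k = eA s" | m s where "k = fA m s" | s where "k = e1 s" | s where "k = e2 s"
    | s where "k = eC s"
proof -
  obtain t d where k: "k = prod_encode (t, d)" by (rule nat_decomp)
  obtain s where s: "d = list_encode s" by (rule nat_decomp1)
  obtain m s' where s': "d = prod_encode (m, list_encode s')" by (rule nat_decomp2)
  have "t = 0 \<or> t = 2 \<or> t = 4 \<or> t = 5 \<or> t = 7" using assms k by auto
  moreover have "t = 0 \<Longrightarrow> thesis" using that(1) k s by blast
  moreover have "t = 2 \<Longrightarrow> thesis" using that(2) k s' by blast
  moreover have "t = 4 \<Longrightarrow> thesis" using that(3) k s by blast
  moreover have "t = 5 \<Longrightarrow> thesis" using that(4) k s by blast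
  moreover have "t = 7 \<Longrightarrow> thesis" using that(5) k s by blast
  ultimately show ?thesis by blast
qed

lemma edge_eA: "(eA s, eA t) \<in> Rl \<longleftrightarrow> sp s t \<and> good R1 p t"
  by (auto elim: RL.cases intro: RL.intros)
lemma edge_fA: "(fA m s, fA m t) \<in> Rl \<longleftrightarrow> sp s t \<and> good R1 p t"
  by (auto elim: RL.cases intro: RL.intros)
lemma edge_e1: "(e1 s, e1 t) \<in> Rl \<longleftrightarrow> sp s t \<and> good R2 p t"
  by (auto elim: RL.cases intro: RL.intros)
lemma edge_e2: "(e2 s, e2 t) \<in> Rl \<longleftrightarrow> sp s t \<and> good R2 p t"
  by (auto elim: RL.cases intro: RL.intros)
lemma edge_eC: "(eC s, eC t) \<in> Rl \<longleftrightarrow> sp s t \<and> good R3 p t"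
  by (auto elim: RL.cases intro: RL.intros)

lemma pred_eA: "(j, eA t) \<in> Rl \<Longrightarrow> j \<in> range eA" by (erule RL.cases) auto
lemma pred_fA: "(j, fA m t) \<in> Rl \<Longrightarrow> j \<in> range (fA m)" by (erule RL.cases) auto
lemma pred_e1: "(j, e1 t) \<in> Rl \<Longrightarrow> j \<in> range e1" by (erule RL.cases) auto
lemma pred_e2: "(j, e2 t) \<in> Rl \<Longrightarrow> j \<in> range e2" by (erule RL.cases) auto
lemma pred_eC: "(j, eC t) \<in> Rl \<Longrightarrow> j \<in> range eC" by (erule RL.cases) auto

lemma out_eA: "(eA s, c) \<in> Rl \<Longrightarrow> \<not> isB c \<Longrightarrow> c \<in> range eA" by (erule RL.cases) auto
lemma out_fA: "(fA m s, c) \<in> Rl \<Longrightarrow> \<not> isB c \<Longrightarrow> c \<in> range (fA m)" by (erule RL.cases) auto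
lemma out_e1: "(e1 s, c) \<in> Rl \<Longrightarrow> \<not> isB c \<Longrightarrow> c \<in> range e1" by (erule RL.cases) auto
lemma out_e2: "(e2 s, c) \<in> Rl \<Longrightarrow> \<not> isB c \<Longrightarrow> c \<in> range e2" by (erule RL.cases) auto
lemma out_eC: "(eC s, c) \<in> Rl \<Longrightarrow> \<not> isB c \<Longrightarrow> c \<in> range eC" by (erule RL.cases) auto

end

definition PI :: "(nat list \<Rightarrow> nat) \<Rightarrow> (nat \<Rightarrow> nat) \<Rightarrow> nat set" where
  "PI e f = range (\<lambda>k. e (map f [0..<k]))"

definition lst :: "nat \<Rightarrow> nat list" where
  "lst k = (if fst (prod_decode k) = 2 then list_decode (snd (prod_decode (snd (prod_decode k))))
            else list_decode (snd (prod_decode k)))"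

lemma lst_simps[simp]: "lst (eA s) = s" "lst (fA m s) = s" "lst (e1 s) = s" "lst (e2 s) = s" "lst (eC s) = s"
  by (simp_all add: lst_def)

lemma map_upt_eq_len: "map f [0..<a] = map g [0..<b] \<Longrightarrow> a = b"
  by (metis diff_zero length_map length_upt)

lemma PI_sub_eq:
  assumes "PI e f \<subseteq> PI e' f'"
    and l: "\<And>s. lst (e s) = s" "\<And>s. lst (e' s) = s"
  shows "PI e f = PI e' f'"
proof -
  have eq: "e (map f [0..<k]) = e' (map f' [0..<k])" for k
  proof -
    obtain k' where k': "e (map f [0..<k]) = e' (map f' [0..<k'])"
      using assms(1) unfolding PI_def by blast
    then have "map f [0..<k] = map f' [0..<k']" using l by metis
    then have "k = k'" by (rule map_upt_eq_len)
    then show ?thesis using k' by simp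
  qed
  show ?thesis unfolding PI_def using eq by auto
qed

context
  fixes R1 R2 R3 :: "nat \<Rightarrow> nat" and p :: nat
begin

lemma ideal_PI_eA: "ipath R1 p f \<Longrightarrow> is_ideal (Rl R1 R2 R3 p) (PI eA f)"
  unfolding PI_def by (rule path_ideal_gen[where G="good R1 p"]) (auto simp: edge_eA pred_eA path_good)
lemma ideal_PI_fA: "ipath R1 p f \<Longrightarrow> is_ideal (Rl R1 R2 R3 p) (PI (fA m) f)"
  unfolding PI_def by (rule path_ideal_gen[where G="good R1 p"]) (auto simp: edge_fA pred_fA path_good)
lemma ideal_PI_e1: "ipath R2 p f \<Longrightarrow> is_ideal (Rl R1 R2 R3 p) (PI e1 f)"
  unfolding PI_def by (rule path_ideal_gen[where G="good R2 p"]) (auto simp: edge_e1 pred_e1 path_good)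
lemma ideal_PI_e2: "ipath R2 p f \<Longrightarrow> is_ideal (Rl R1 R2 R3 p) (PI e2 f)"
  unfolding PI_def by (rule path_ideal_gen[where G="good R2 p"]) (auto simp: edge_e2 pred_e2 path_good)
lemma ideal_PI_eC: "ipath R3 p f \<Longrightarrow> is_ideal (Rl R1 R2 R3 p) (PI eC f)"
  unfolding PI_def by (rule path_ideal_gen[where G="good R3 p"]) (auto simp: edge_eC pred_eC path_good)

lemma classify_copy:
  fixes e :: "nat list \<Rightarrow> nat" and G :: "nat list \<Rightarrow> bool"
  assumes I: "is_ideal (Rl R1 R2 R3 p) I" and noB: "\<forall>b\<in>I. \<not> isB b" and k0: "k0 \<in> I" "k0 \<in> range e"
    and out: "\<And>s c. (e s, c) \<in> Rl R1 R2 R3 p \<Longrightarrow> \<not> isB c \<Longrightarrow> c \<in> range e"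
    and pred: "\<And>j t. (j, e t) \<in> Rl R1 R2 R3 p \<Longrightarrow> j \<in> range e"
    and edge: "\<And>s t. (e s, e t) \<in> Rl R1 R2 R3 p \<longleftrightarrow> sp s t \<and> G t"
    and Gpre: "\<And>s t. G t \<Longrightarrow> pf s t \<Longrightarrow> G s"
  shows "\<exists>f. (\<forall>k. G (map f [0..<k])) \<and> I = PI e f"
proof -
  have sub: "I \<subseteq> range e"
  proof
    fix k assume k: "k \<in> I"
    obtain c where c: "c \<in> I" "(k0, c) \<in> Rl R1 R2 R3 p" "(k, c) \<in> Rl R1 R2 R3 p"
      using ideal_dir[OF I k0(1) k] by blast
    obtain s0 where s0: "k0 = e s0" using k0(2) by blast
    have "c \<in> range e" using out[of s0 c] c(2) s0 noB c(1) by blast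
    then obtain t where "c = e t" by blast
    then show "k \<in> range e" using pred c(3) by blast
  qed
  have "\<exists>f. (\<forall>k. G (map f [0..<k])) \<and> I = range (\<lambda>k. e (map f [0..<k]))"
  proof (rule ideal_path_gen[where emb=e and G=G and R="Rl R1 R2 R3 p"])
    show "\<And>s t. (e s, e t) \<in> Rl R1 R2 R3 p \<longleftrightarrow> sp s t \<and> G t" by (rule edge)
    show "\<And>s t. G t \<Longrightarrow> pf s t \<Longrightarrow> G s" by (rule Gpre)
    show "is_ideal (Rl R1 R2 R3 p) I" by (rule I)
    show "I \<subseteq> range e" by (rule sub)
  qed
  then show ?thesis unfolding PI_def by blast
qed

lemma classify:
  assumes I: "is_ideal (Rl R1 R2 R3 p) I"
  shows "(\<exists>b. isB b \<and> I = Dn R1 R2 R3 p b) \<or> (\<exists>f. ipath R1 p f \<and> I = PI eA f)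
    \<or> (\<exists>m f. ipath R1 p f \<and> I = PI (fA m) f) \<or> (\<exists>f. ipath R2 p f \<and> I = PI e1 f)
    \<or> (\<exists>f. ipath R2 p f \<and> I = PI e2 f) \<or> (\<exists>f. ipath R3 p f \<and> I = PI eC f)"
proof (cases "\<exists>b\<in>I. isB b")
  case True
  then obtain b where "b \<in> I" "isB b" by blast
  then show ?thesis using ideal_with_B[OF I] by blast
next
  case False
  then have noB: "\<forall>b\<in>I. \<not> isB b" by blast
  obtain k0 where k0: "k0 \<in> I" using ideal_ne[OF I] by blast
  then have "\<not> isB k0" using noB by blast
  then show ?thesis
  proof (cases rule: notB_cases)
    case (1 s)
    then have "\<exists>f. (\<forall>k. good R1 p (map f [0..<k])) \<and> I = PI eA f"
      using k0 by (intro classify_copy[OF I noB k0]) (auto simp: out_eA pred_eA edge_eA good_pre)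
    then obtain f where f: "\<forall>k. good R1 p (map f [0..<k])" "I = PI eA f" by blast
    then have "ipath R1 p f" by (simp add: path_good)
    then have "\<exists>f. ipath R1 p f \<and> I = PI eA f" using f(2) by blast
    then show ?thesis by (intro disjI2 disjI1)
  next
    case (2 m s)
    then have "\<exists>f. (\<forall>k. good R1 p (map f [0..<k])) \<and> I = PI (fA m) f"
      using k0 by (intro classify_copy[OF I noB k0]) (auto simp: out_fA pred_fA edge_fA good_pre)
    then obtain f where f: "\<forall>k. good R1 p (map f [0..<k])" "I = PI (fA m) f" by blast
    then have "ipath R1 p f" by (simp add: path_good)
    then have "\<exists>m f. ipath R1 p f \<and> I = PI (fA m) f" using f(2) by blast
    then show ?thesis by (intro disjI2 disjI2 disjI1)
  next
    case (3 s)
    then have "\<exists>f. (\<forall>k. good R2 p (map f [0..<k])) \<and> I = PI e1 f"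
      using k0 by (intro classify_copy[OF I noB k0]) (auto simp: out_e1 pred_e1 edge_e1 good_pre)
    then obtain f where f: "\<forall>k. good R2 p (map f [0..<k])" "I = PI e1 f" by blast
    then have "ipath R2 p f" by (simp add: path_good)
    then have "\<exists>f. ipath R2 p f \<and> I = PI e1 f" using f(2) by blast
    then show ?thesis by (intro disjI2 disjI2 disjI2 disjI1)
  next
    case (4 s)
    then have "\<exists>f. (\<forall>k. good R2 p (map f [0..<k])) \<and> I = PI e2 f"
      using k0 by (intro classify_copy[OF I noB k0]) (auto simp: out_e2 pred_e2 edge_e2 good_pre)
    then obtain f where f: "\<forall>k. good R2 p (map f [0..<k])" "I = PI e2 f" by blast
    then have "ipath R2 p f" by (simp add: path_good)
    then have "\<exists>f. ipath R2 p f \<and> I = PI e2 f" using f(2) by blast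
    then show ?thesis by (intro disjI2 disjI2 disjI2 disjI2 disjI1)
  next
    case (5 s)
    then have "\<exists>f. (\<forall>k. good R3 p (map f [0..<k])) \<and> I = PI eC f"
      using k0 by (intro classify_copy[OF I noB k0]) (auto simp: out_eC pred_eC edge_eC good_pre)
    then obtain f where f: "\<forall>k. good R3 p (map f [0..<k])" "I = PI eC f" by blast
    then have "ipath R3 p f" by (simp add: path_good)
    then have "\<exists>f. ipath R3 p f \<and> I = PI eC f" using f(2) by blast
    then show ?thesis by (intro disjI2 disjI2 disjI2 disjI2 disjI2)
  qed
qed

end

definition copies :: "(nat list \<Rightarrow> nat) set" where
  "copies = {eA, e1, e2, eC} \<union> range (\<lambda>m. fA m)"

lemma copies_lst: "e \<in> copies \<Longrightarrow> lst (e s) = s"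
  unfolding copies_def by auto

lemma copies_notB: "e \<in> copies \<Longrightarrow> \<not> isB (e s)"
  unfolding copies_def by auto

definition bnd :: "nat \<Rightarrow> nat" where
  "bnd b = fst (prod_decode (snd (prod_decode b))) + length (list_decode (snd (prod_decode (snd (prod_decode b)))))
     + length (list_decode (snd (prod_decode b)))"

lemma pf_take_len: "pf s (take m t) \<Longrightarrow> length s \<le> m"
  using pf_length by fastforce

context
  fixes R1 R2 R3 :: "nat \<Rightarrow> nat" and p :: nat
begin

lemma bnd_lemma:
  assumes "e \<in> copies" "e \<noteq> eC" "(e s, b) \<in> Rl R1 R2 R3 p" "isB b"
  shows "length s \<le> bnd b"
proof -
  consider "e = eA" | "e = e1" | "e = e2" | m where "e = fA m"
    using assms(1,2) unfolding copies_def by blast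
  then show ?thesis
  proof cases
    case 1
    from assms(3,4) show ?thesis unfolding 1
      by (cases rule: RL.cases) (auto simp: bnd_def dest!: pf_take_len)
  next
    case 2
    from assms(3,4) show ?thesis unfolding 2
      by (cases rule: RL.cases) (auto simp: bnd_def dest!: pf_length)
  next
    case 3
    from assms(3,4) show ?thesis unfolding 3
      by (cases rule: RL.cases) (auto simp: bnd_def dest!: pf_length)
  next
    case 4
    from assms(3,4) show ?thesis unfolding 4
      by (cases rule: RL.cases) (auto simp: bnd_def dest!: pf_length)
  qed
qed

lemma PI_not_sub_D:
  assumes "e \<in> copies" "e \<noteq> eC" "isB b"
  shows "\<not> PI e f \<subseteq> Dn R1 R2 R3 p b"
proof
  assume "PI e f \<subseteq> Dn R1 R2 R3 p b"
  then have "e (map f [0..<Suc (bnd b)]) \<in> Dn R1 R2 R3 p b" unfolding PI_def by blast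
  then have "(e (map f [0..<Suc (bnd b)]), b) \<in> Rl R1 R2 R3 p" unfolding Dn_def by simp
  from bnd_lemma[OF assms(1,2) this assms(3)] show False by simp
qed

lemma PI_sub_ideal:
  assumes e: "e \<in> copies" "e \<noteq> eC" and J: "is_ideal (Rl R1 R2 R3 p) J" and sub: "PI e f \<subseteq> J"
  shows "PI e f = J"
proof -
  have gen: "PI e f = PI e' f'" if "e' \<in> copies" "PI e f \<subseteq> PI e' f'" for e' f'
    using PI_sub_eq[of e f e' f'] that e(1) copies_lst by blast
  from classify[OF J] show ?thesis
  proof (elim disjE exE conjE)
    fix b assume "isB b" "J = Dn R1 R2 R3 p b"
    then show ?thesis using PI_not_sub_D[OF e \<open>isB b\<close>] sub by blast
  next
    fix f' assume "J = PI eA f'" then show ?thesis using gen[of eA f'] sub by (simp add: copies_def)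
  next
    fix m f' assume "J = PI (fA m) f'" then show ?thesis using gen[of "fA m" f'] sub by (simp add: copies_def)
  next
    fix f' assume "J = PI e1 f'" then show ?thesis using gen[of e1 f'] sub by (simp add: copies_def)
  next
    fix f' assume "J = PI e2 f'" then show ?thesis using gen[of e2 f'] sub by (simp add: copies_def)
  next
    fix f' assume "J = PI eC f'" then show ?thesis using gen[of eC f'] sub by (simp add: copies_def)
  qed
qed

lemma Dn_sub_ideal:
  assumes b: "isB b" and J: "is_ideal (Rl R1 R2 R3 p) J" and sub: "Dn R1 R2 R3 p b \<subseteq> J"
  shows "Dn R1 R2 R3 p b = J"
proof -
  have bb: "b \<in> Dn R1 R2 R3 p b" using isB_refl[OF b] unfolding Dn_def by simp
  have gen: False if "e \<in> copies" "J = PI e f" for e f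
  proof -
    have "b \<in> PI e f" using bb sub that by blast
    then obtain k where "b = e (map f [0..<k])" unfolding PI_def by blast
    then show False using copies_notB[OF that(1)] b by simp
  qed
  from classify[OF J] show ?thesis
  proof (elim disjE exE conjE)
    fix b' assume b': "isB b'" "J = Dn R1 R2 R3 p b'"
    then have "(b, b') \<in> Rl R1 R2 R3 p" using bb sub unfolding Dn_def by blast
    then have "b' = b" using isB_max[OF b] by blast
    then show ?thesis using b' by simp
  next
    fix f' assume "J = PI eA f'" then show ?thesis using gen[of eA f'] by (simp add: copies_def)
  next
    fix m f' assume "J = PI (fA m) f'" then show ?thesis using gen[of "fA m" f'] by (simp add: copies_def)
  next
    fix f' assume "J = PI e1 f'" then show ?thesis using gen[of e1 f'] by (simp add: copies_def)
  next
    fix f' assume "J = PI e2 f'" then show ?thesis using gen[of e2 f'] by (simp add: copies_def)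
  next
    fix f' assume "J = PI eC f'" then show ?thesis using gen[of eC f'] by (simp add: copies_def)
  qed
qed

lemma neq_eC: "eA \<noteq> eC" "e1 \<noteq> eC" "e2 \<noteq> eC" "fA m \<noteq> eC"
  by (auto simp: fun_eq_iff)

lemma t1_case:
  assumes noC: "\<not> (\<exists>f. ipath R3 p f)"
  shows "t1_space (ideal_space (Rl R1 R2 R3 p))"
proof (rule t1_ideal)
  fix I J assume I: "is_ideal (Rl R1 R2 R3 p) I" and J: "is_ideal (Rl R1 R2 R3 p) J" and IJ: "I \<subseteq> J"
  from classify[OF I] show "I = J"
  proof (elim disjE exE conjE)
    fix b assume "isB b" "I = Dn R1 R2 R3 p b"
    then show ?thesis using Dn_sub_ideal[OF _ J] IJ by blast
  next
    fix f assume "I = PI eA f" then show ?thesis using PI_sub_ideal[OF _ _ J] IJ neq_eC by (simp add: copies_def)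
  next
    fix m f assume "I = PI (fA m) f" then show ?thesis using PI_sub_ideal[OF _ _ J] IJ neq_eC by (simp add: copies_def)
  next
    fix f assume "I = PI e1 f" then show ?thesis using PI_sub_ideal[OF _ _ J] IJ neq_eC by (simp add: copies_def)
  next
    fix f assume "I = PI e2 f" then show ?thesis using PI_sub_ideal[OF _ _ J] IJ neq_eC by (simp add: copies_def)
  next
    fix f assume "ipath R3 p f" then show ?thesis using noC by blast
  qed
qed

lemma discrete_case:
  assumes "\<not> (\<exists>f. ipath R1 p f)" "\<not> (\<exists>f. ipath R2 p f)" "\<not> (\<exists>f. ipath R3 p f)"
  shows "metrizable_space (ideal_space (Rl R1 R2 R3 p))"
proof (rule discrete_ideal)
  fix I assume I: "is_ideal (Rl R1 R2 R3 p) I"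
  from classify[OF I] obtain b where "isB b" "I = Dn R1 R2 R3 p b" using assms by blast
  then show "\<exists>k. basic_open (Rl R1 R2 R3 p) k = {I}" using basic_D by blast
qed

lemma not_t1_case:
  assumes "ipath R3 p f"
  shows "\<not> t1_space (ideal_space (Rl R1 R2 R3 p))"
proof (rule not_t1_ideal)
  show "is_ideal (Rl R1 R2 R3 p) (PI eC f)" using ideal_PI_eC[OF assms] .
  show "is_ideal (Rl R1 R2 R3 p) (Dn R1 R2 R3 p (tp 0))" by (rule ideal_D) simp
  show "PI eC f \<subseteq> Dn R1 R2 R3 p (tp 0)" unfolding PI_def Dn_def by (auto intro: RL.eCt)
  have "tp 0 \<in> Dn R1 R2 R3 p (tp 0)" unfolding Dn_def mem_Collect_eq by (rule RL.tpt)
  moreover have "tp 0 \<notin> PI eC f" unfolding PI_def by auto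
  ultimately show "PI eC f \<noteq> Dn R1 R2 R3 p (tp 0)" by blast
qed

lemma not_haus_case:
  assumes "ipath R2 p f"
  shows "\<not> Hausdorff_space (ideal_space (Rl R1 R2 R3 p))"
proof (rule not_haus_ideal)
  show "is_ideal (Rl R1 R2 R3 p) (PI e1 f)" using ideal_PI_e1[OF assms] .
  show "is_ideal (Rl R1 R2 R3 p) (PI e2 f)" using ideal_PI_e2[OF assms] .
  have "e1 [] \<in> PI e1 f" unfolding PI_def by (metis list.map(1) rangeI upt_0)
  moreover have "e1 [] \<notin> PI e2 f" unfolding PI_def by auto
  ultimately show "PI e1 f \<noteq> PI e2 f" by blast
next
  fix k k' assume "k \<in> PI e1 f" "k' \<in> PI e2 f"
  then obtain i j where ij: "k = e1 (map f [0..<i])" "k' = e2 (map f [0..<j])" unfolding PI_def by blast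
  let ?L = "Dn R1 R2 R3 p (bB (map f [0..<max i j]))"
  have "is_ideal (Rl R1 R2 R3 p) ?L" by (rule ideal_D) simp
  moreover have "k \<in> ?L" unfolding Dn_def ij mem_Collect_eq by (rule RL.e1b) (rule pf_map_upt, simp)
  moreover have "k' \<in> ?L" unfolding Dn_def ij mem_Collect_eq by (rule RL.e2b) (rule pf_map_upt, simp)
  ultimately show "\<exists>L. is_ideal (Rl R1 R2 R3 p) L \<and> k \<in> L \<and> k' \<in> L" by blast
qed

end

lemma PI_mem: "e (map f [0..<n]) \<in> PI e f"
  unfolding PI_def by blast

lemma PI_nil: "e [] \<in> PI e f"
  using PI_mem[of e f 0] by simp

lemma PI_neq: assumes "PI e f \<noteq> PI e f'" shows "\<exists>n. map f [0..<n] \<noteq> map f' [0..<n]"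
proof (rule ccontr)
  assume "\<not> ?thesis"
  then have eq: "\<And>n. map f [0..<n] = map f' [0..<n]" by blast
  have "(\<lambda>k. e (map f [0..<k])) = (\<lambda>k. e (map f' [0..<k]))" by (simp only: eq)
  then have "PI e f = PI e f'" unfolding PI_def by (rule arg_cong[where f=range])
  then show False using assms by simp
qed

lemma ub_sym: "ub R a b \<longleftrightarrow> ub R b a"
  unfolding ub_def by blast

lemma pf_same_len: "pf a t \<Longrightarrow> pf b t \<Longrightarrow> length a = length b \<Longrightarrow> a = b"
  unfolding pf_def by metis

context
  fixes R1 R2 R3 :: "nat \<Rightarrow> nat" and p :: nat
begin

lemma ub_eA_cases: "(eA a, c) \<in> Rl R1 R2 R3 p \<Longrightarrow> (\<exists>t. c = eA t \<and> pf a t) \<or> (\<exists>m t. c = bA m t \<and> pf a (take m t))"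
  by (erule RL.cases) (auto simp: sp_def)
lemma ub_fA_cases: "(fA m a, c) \<in> Rl R1 R2 R3 p \<Longrightarrow> (\<exists>t. c = fA m t \<and> pf a t) \<or> (\<exists>t. c = bA m t \<and> pf a t)"
  by (erule RL.cases) (auto simp: sp_def)

lemma ub_eA_eA: "ub (Rl R1 R2 R3 p) (eA a) (eA b) \<Longrightarrow> length a = length b \<Longrightarrow> a = b"
  unfolding ub_def
proof (elim exE conjE)
  fix c assume l: "length a = length b" and ca: "(eA a, c) \<in> Rl R1 R2 R3 p" and cb: "(eA b, c) \<in> Rl R1 R2 R3 p"
  from ub_eA_cases[OF ca] ub_eA_cases[OF cb] l show "a = b"
    by (auto dest: pf_same_len)
qed

lemma ub_fA_fA: "ub (Rl R1 R2 R3 p) (fA m a) (fA m' b) \<Longrightarrow> m = m' \<and> (length a = length b \<longrightarrow> a = b)"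
  unfolding ub_def
proof (elim exE conjE)
  fix c assume ca: "(fA m a, c) \<in> Rl R1 R2 R3 p" and cb: "(fA m' b, c) \<in> Rl R1 R2 R3 p"
  from ub_fA_cases[OF ca] ub_fA_cases[OF cb] show "m = m' \<and> (length a = length b \<longrightarrow> a = b)"
    by (auto dest: pf_same_len)
qed

lemma ub_eA_fA: "ub (Rl R1 R2 R3 p) (eA a) (fA m b) \<Longrightarrow> length a \<le> m"
  unfolding ub_def
proof (elim exE conjE)
  fix c assume ca: "(eA a, c) \<in> Rl R1 R2 R3 p" and cb: "(fA m b, c) \<in> Rl R1 R2 R3 p"
  from ub_eA_cases[OF ca] ub_fA_cases[OF cb] show "length a \<le> m"
    by (auto dest: pf_take_len)
qed

lemma sep_AA:
  assumes "PI eA f \<noteq> PI eA f'"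
  shows "\<exists>k\<in>PI eA f. \<exists>k'\<in>PI eA f'. \<not> ub (Rl R1 R2 R3 p) k k'"
proof -
  obtain n where n: "map f [0..<n] \<noteq> map f' [0..<n]" using PI_neq[OF assms] by blast
  have "\<not> ub (Rl R1 R2 R3 p) (eA (map f [0..<n])) (eA (map f' [0..<n]))"
    using ub_eA_eA n by fastforce
  then show ?thesis using PI_mem[of eA f n] PI_mem[of eA f' n] by blast
qed

lemma sep_FF:
  assumes "PI (fA m) f \<noteq> PI (fA m') f'"
  shows "\<exists>k\<in>PI (fA m) f. \<exists>k'\<in>PI (fA m') f'. \<not> ub (Rl R1 R2 R3 p) k k'"
proof (cases "m = m'")
  case True
  then obtain n where n: "map f [0..<n] \<noteq> map f' [0..<n]" using PI_neq assms by blast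
  have "\<not> ub (Rl R1 R2 R3 p) (fA m (map f [0..<n])) (fA m' (map f' [0..<n]))"
    using ub_fA_fA n by fastforce
  then show ?thesis using PI_mem[of "fA m" f n] PI_mem[of "fA m'" f' n] by blast
next
  case False
  then have "\<not> ub (Rl R1 R2 R3 p) (fA m []) (fA m' [])" using ub_fA_fA by blast
  then show ?thesis using PI_nil[of "fA m" f] PI_nil[of "fA m'" f'] by blast
qed

lemma sep_AF:
  shows "\<exists>k\<in>PI eA f. \<exists>k'\<in>PI (fA m) f'. \<not> ub (Rl R1 R2 R3 p) k k'"
proof -
  have "\<not> ub (Rl R1 R2 R3 p) (eA (map f [0..<Suc m])) (fA m [])"
    using ub_eA_fA by fastforce
  then show ?thesis using PI_mem[of eA f "Suc m"] PI_nil[of "fA m" f'] by blast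
qed

lemma classifyA:
  assumes noB: "\<not> (\<exists>f. ipath R2 p f)" and noC: "\<not> (\<exists>f. ipath R3 p f)"
    and I: "is_ideal (Rl R1 R2 R3 p) I"
  shows "(\<exists>b. isB b \<and> I = Dn R1 R2 R3 p b) \<or> (\<exists>f. I = PI eA f) \<or> (\<exists>m f. I = PI (fA m) f)"
proof -
  from classify[OF I] show ?thesis
  proof (elim disjE exE conjE)
    fix b assume "isB b" "I = Dn R1 R2 R3 p b" then show ?thesis by blast
  next
    fix f assume "I = PI eA f" then show ?thesis by blast
  next
    fix m f assume "I = PI (fA m) f" then show ?thesis by blast
  next
    fix f assume "ipath R2 p f" then have False using noB by blast then show ?thesis ..
  next
    fix f assume "ipath R2 p f" then have False using noB by blast then show ?thesis ..
  next
    fix f assume "ipath R3 p f" then have False using noC by blast then show ?thesis ..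
  qed
qed

lemma sepPI:
  assumes "I \<noteq> J" and I: "(\<exists>f. I = PI eA f) \<or> (\<exists>m f. I = PI (fA m) f)"
    and J: "(\<exists>f. J = PI eA f) \<or> (\<exists>m f. J = PI (fA m) f)"
  shows "\<exists>k\<in>I. \<exists>k'\<in>J. \<not> ub (Rl R1 R2 R3 p) k k'"
proof -
  from I show ?thesis
  proof (elim disjE exE)
    fix f assume If: "I = PI eA f"
    from J show ?thesis
    proof (elim disjE exE)
      fix f' assume "J = PI eA f'" then show ?thesis using sep_AA[of f f'] If assms(1) by simp
    next
      fix m f' assume "J = PI (fA m) f'" then show ?thesis using sep_AF[of f m f'] If by simp
    qed
  next
    fix m f assume If: "I = PI (fA m) f"
    from J show ?thesis
    proof (elim disjE exE)
      fix f' assume Jf: "J = PI eA f'"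
      obtain k k' where kk: "k \<in> PI eA f'" "k' \<in> PI (fA m) f" "\<not> ub (Rl R1 R2 R3 p) k k'"
        using sep_AF[of f' m f] by blast
      then have "\<not> ub (Rl R1 R2 R3 p) k' k" using ub_sym by metis
      then show ?thesis using kk If Jf by blast
    next
      fix m' f' assume "J = PI (fA m') f'" then show ?thesis using sep_FF[of m f m' f'] If assms(1) by simp
    qed
  qed
qed

lemma haus_case:
  assumes noB: "\<not> (\<exists>f. ipath R2 p f)" and noC: "\<not> (\<exists>f. ipath R3 p f)"
  shows "Hausdorff_space (ideal_space (Rl R1 R2 R3 p))"
  unfolding Hausdorff_space_def
proof (intro allI impI, elim conjE)
  let ?X = "ideal_space (Rl R1 R2 R3 p)"
  fix I J assume I0: "I \<in> topspace ?X" and J0: "J \<in> topspace ?X" and IJ: "I \<noteq> J"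
  have I: "is_ideal (Rl R1 R2 R3 p) I" and J: "is_ideal (Rl R1 R2 R3 p) J"
    using I0 J0 unfolding ideal_topspace by auto
  have T1: "t1_space ?X" using t1_case noC by blast
  have isol: "\<exists>U V. openin ?X U \<and> openin ?X V \<and> I' \<in> U \<and> J' \<in> V \<and> disjnt U V"
    if A: "isB b" "I' = Dn R1 R2 R3 p b" "J' \<in> topspace ?X" "I' \<noteq> J'" for I' J' b
  proof -
    have "I' \<in> topspace ?X" using ideal_D[OF A(1)] A(2) unfolding ideal_topspace by simp
    then obtain V where V: "openin ?X V" "J' \<in> V" "I' \<notin> V"
      using T1 A(3,4) unfolding t1_space_def by metis
    have "openin ?X {I'}" using basic_D[OF A(1)] open_basic A(2) by metis
    moreover have "disjnt {I'} V" using V(3) unfolding disjnt_def by blast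
    ultimately show ?thesis using V by blast
  qed
  show "\<exists>U V. openin ?X U \<and> openin ?X V \<and> I \<in> U \<and> J \<in> V \<and> disjnt U V"
  proof (cases "\<exists>b. isB b \<and> I = Dn R1 R2 R3 p b")
    case True
    then obtain b where "isB b" "I = Dn R1 R2 R3 p b" by blast
    then show ?thesis using isol J0 IJ by blast
  next
    case False
    note nI = False
    show ?thesis
    proof (cases "\<exists>b. isB b \<and> J = Dn R1 R2 R3 p b")
      case True
      then obtain b where "isB b" "J = Dn R1 R2 R3 p b" by blast
      then obtain U V where "openin ?X U" "openin ?X V" "J \<in> U" "I \<in> V" "disjnt U V"
        using isol[of b J I] I0 IJ by metis
      moreover have "disjnt V U" using \<open>disjnt U V\<close> by (simp add: disjnt_sym)
      ultimately show ?thesis by blast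
    next
      case False
      have "(\<exists>f. I = PI eA f) \<or> (\<exists>m f. I = PI (fA m) f)" using classifyA[OF noB noC I] nI by blast
      moreover have "(\<exists>f. J = PI eA f) \<or> (\<exists>m f. J = PI (fA m) f)" using classifyA[OF noB noC J] False by blast
      ultimately obtain k k' where "k \<in> I" "k' \<in> J" "\<not> ub (Rl R1 R2 R3 p) k k'"
        using sepPI[OF IJ] by blast
      then show ?thesis using sep_ideal[OF _ _ I J] by blast
    qed
  qed
qed

definition nonfA :: "nat \<Rightarrow> bool" where "nonfA k \<longleftrightarrow> (\<forall>m s. k \<noteq> fA m s)"

lemma not_reg_case:
  assumes x: "ipath R1 p x"
  shows "\<not> regular_space (ideal_space (Rl R1 R2 R3 p))"
proof
  let ?X = "ideal_space (Rl R1 R2 R3 p)"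
  assume reg: "regular_space ?X"
  define C where "C = {J. \<exists>m f. ipath R1 p f \<and> J = PI (fA m) f}"
  have C_nonfA: "\<not> (k \<in> J \<and> J \<in> C)" if nk: "nonfA k" for k J
  proof
    assume a: "k \<in> J \<and> J \<in> C"
    then obtain m f where "J = PI (fA m) f" unfolding C_def by blast
    then obtain n where "k = fA m (map f [0..<n])" using a unfolding PI_def by blast
    then show False using nk unfolding nonfA_def by blast
  qed
  have Csub: "C \<subseteq> topspace ?X" unfolding C_def ideal_topspace using ideal_PI_fA by blast
  have witness: "\<exists>k\<in>I. nonfA k" if I: "is_ideal (Rl R1 R2 R3 p) I" and nC: "I \<notin> C" for I
  proof -
    from classify[OF I] show ?thesis
    proof (elim disjE exE conjE)
      fix b assume b: "isB b" "I = Dn R1 R2 R3 p b"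
      have "b \<in> I" using isB_refl[OF b(1)] b(2) unfolding Dn_def by simp
      moreover have "nonfA b" using b(1) unfolding nonfA_def by auto
      ultimately show ?thesis by blast
    next
      fix f assume If: "I = PI eA f"
      have "eA [] \<in> I" unfolding If by (rule PI_nil[of eA f])
      moreover have "nonfA (eA [])" by (simp add: nonfA_def)
      ultimately show ?thesis by blast
    next
      fix m f assume "ipath R1 p f" "I = PI (fA m) f" then show ?thesis using nC unfolding C_def by blast
    next
      fix f assume If: "I = PI e1 f"
      have "e1 [] \<in> I" unfolding If by (rule PI_nil[of e1 f])
      moreover have "nonfA (e1 [])" by (simp add: nonfA_def)
      ultimately show ?thesis by blast
    next
      fix f assume If: "I = PI e2 f"
      have "e2 [] \<in> I" unfolding If by (rule PI_nil[of e2 f])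
      moreover have "nonfA (e2 [])" by (simp add: nonfA_def)
      ultimately show ?thesis by blast
    next
      fix f assume If: "I = PI eC f"
      have "eC [] \<in> I" unfolding If by (rule PI_nil[of eC f])
      moreover have "nonfA (eC [])" by (simp add: nonfA_def)
      ultimately show ?thesis by blast
    qed
  qed
  have "openin ?X (topspace ?X - C)"
  proof (subst openin_subopen, intro ballI)
    fix I assume I: "I \<in> topspace ?X - C"
    then have Ii: "is_ideal (Rl R1 R2 R3 p) I" unfolding ideal_topspace by simp
    obtain k where k: "k \<in> I" "nonfA k" using witness[OF Ii] I by blast
    have "basic_open (Rl R1 R2 R3 p) k \<subseteq> topspace ?X - C"
    proof
      fix J assume J: "J \<in> basic_open (Rl R1 R2 R3 p) k"
      then have "is_ideal (Rl R1 R2 R3 p) J" "k \<in> J" unfolding basic_open_def by auto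
      then show "J \<in> topspace ?X - C" using C_nonfA[OF k(2)] unfolding ideal_topspace by blast
    qed
    moreover have "I \<in> basic_open (Rl R1 R2 R3 p) k" using Ii k unfolding basic_open_def by simp
    ultimately show "\<exists>T. openin ?X T \<and> I \<in> T \<and> T \<subseteq> topspace ?X - C"
      using open_basic by blast
  qed
  then have closed: "closedin ?X C" unfolding closedin_def using Csub by blast
  have aI: "is_ideal (Rl R1 R2 R3 p) (PI eA x)" by (rule ideal_PI_eA[OF x])
  have "nonfA (eA [])" unfolding nonfA_def by simp
  moreover have "eA [] \<in> PI eA x" by (rule PI_nil[of eA x])
  ultimately have aC: "PI eA x \<notin> C" using C_nonfA by blast
  have "PI eA x \<in> topspace ?X - C" using aI aC by (simp add: ideal_topspace)
  then have "\<exists>U V. openin ?X U \<and> openin ?X V \<and> PI eA x \<in> U \<and> C \<subseteq> V \<and> disjnt U V"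
    using reg closed unfolding regular_space_def by blast
  then obtain U V where UV: "openin ?X U" "openin ?X V" "PI eA x \<in> U" "C \<subseteq> V" "disjnt U V"
    by blast
  obtain k where k: "k \<in> PI eA x" "basic_open (Rl R1 R2 R3 p) k \<subseteq> U" using open_nbhd UV by blast
  then obtain n where n: "k = eA (map x [0..<n])" unfolding PI_def by blast
  have "PI (fA n) x \<in> C" unfolding C_def using x by blast
  then have "PI (fA n) x \<in> V" using UV by blast
  then obtain k' where k': "k' \<in> PI (fA n) x" "basic_open (Rl R1 R2 R3 p) k' \<subseteq> V" using open_nbhd UV by blast
  then obtain j where j: "k' = fA n (map x [0..<j])" unfolding PI_def by blast
  let ?N = "max j n"
  let ?L = "Dn R1 R2 R3 p (bA n (map x [0..<?N]))"
  have L: "is_ideal (Rl R1 R2 R3 p) ?L" by (rule ideal_D) simp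
  have "take n (map x [0..<?N]) = map x [0..<n]" by (simp add: take_map min_def)
  then have "k \<in> ?L" unfolding Dn_def mem_Collect_eq n by (intro RL.eAb) simp
  moreover have "k' \<in> ?L" unfolding Dn_def mem_Collect_eq j by (rule RL.fAb) (rule pf_map_upt, simp)
  ultimately have "?L \<in> U \<inter> V" using L k(2) k'(2) unfolding basic_open_def by blast
  then show False using UV(5) unfolding disjnt_def by blast
qed

end

inductive_cases evalZ_E: "eval Z xs y"
inductive_cases evalS_E: "eval S xs y"
inductive_cases evalId_E: "eval (recf.Id i) xs y"
inductive_cases evalCn_E: "eval (Cn f gs) xs y"
inductive_cases evalPr_E: "eval (Pr f g) xs y"
inductive_cases evalMn_E: "eval (Mn f) xs y"

lemma list_all2_det:
  assumes "list_all2 (\<lambda>g y. eval g xs y \<and> (\<forall>z. eval g xs z \<longrightarrow> y = z)) gs ys"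
    and "list_all2 (\<lambda>g y. eval g xs y) gs ys'"
  shows "ys = ys'"
  using assms
proof (induction gs arbitrary: ys ys')
  case Nil then show ?case by auto
next
  case (Cons a gs)
  from Cons.prems obtain y ys0 where y: "ys = y # ys0"
    by (auto simp: list_all2_Cons1)
  from Cons.prems obtain y' ys0' where y': "ys' = y' # ys0'"
    by (auto simp: list_all2_Cons1)
  show ?case using Cons.prems Cons.IH unfolding y y' by auto
qed

lemma eval_det: "eval r xs y \<Longrightarrow> eval r xs z \<Longrightarrow> y = z"
proof (induction arbitrary: z rule: eval.induct)
  case (eval_Z xs) from eval_Z.prems show ?case by (rule evalZ_E) simp
next
  case (eval_S x xs) from eval_S.prems show ?case by (rule evalS_E) simp
next
  case (eval_Id i xs) from eval_Id.prems show ?case by (rule evalId_E) simp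
next
  case (eval_Cn xs gs ys f z0)
  from eval_Cn.prems obtain ys' where a: "list_all2 (\<lambda>g y. eval g xs y) gs ys'" "eval f ys' z"
    by (rule evalCn_E) simp
  have "ys = ys'" using list_all2_det[OF _ a(1)] eval_Cn.IH(1)
    by (simp add: list_all2_mono)
  then show ?case using eval_Cn.IH(2) a(2) by simp
next
  case (eval_Pr0 f xs y g) 
  from eval_Pr0.prems have "eval f xs z" by (rule evalPr_E) simp_all
  then show ?case using eval_Pr0.IH by simp
next
  case (eval_PrS f g n xs y z0)
  from eval_PrS.prems obtain y' where "eval (Pr f g) (n # xs) y'" "eval g (n # y' # xs) z"
    by (rule evalPr_E) simp_all
  then show ?case using eval_PrS.IH by simp
next
  case (eval_Mn f n xs)
  from eval_Mn.prems have b: "eval f (z # xs) 0" "\<forall>m<z. \<exists>y. eval f (m # xs) (Suc y)"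
    by (rule evalMn_E, simp)+
  show ?case
  proof (rule ccontr)
    assume "n \<noteq> z"
    then have "n < z \<or> z < n" by arith
    then show False
    proof
      assume "n < z"
      then obtain y where "eval f (n # xs) (Suc y)" using b by blast
      then have "0 = Suc y" using eval_Mn.IH(1) by blast
      then show False by simp
    next
      assume "z < n"
      then obtain y where "eval f (z # xs) (Suc y)" "\<forall>w. eval f (z # xs) w \<longrightarrow> Suc y = w"
        using eval_Mn.IH(2) by blast
      then have "Suc y = 0" using b(1) by blast
      then show False by simp
    qed
  qed
qed

lemma code_inj: "code r = code r' \<Longrightarrow> r = r'"
proof (induction r arbitrary: r')
  case Z then show ?case by (cases r') (auto simp: prod_encode_eq)
next
  case S then show ?case by (cases r') (auto simp: prod_encode_eq)
next
  case (Id x) then show ?case by (cases r') (auto simp: prod_encode_eq)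
next
  case (Cn f gs)
  then show ?case
  proof (cases r')
    case (Cn f' gs')
    with Cn.prems have 1: "code f = code f'" and 2: "map code gs = map code gs'"
      by (auto simp: prod_encode_eq list_encode_eq)
    have "f = f'" using Cn.IH(1) 1 by blast
    moreover have "gs = gs'"
      using 2 Cn.IH(2)
    proof (induction gs arbitrary: gs')
      case Nil then show ?case by simp
    next
      case (Cons a gs) then show ?case by (cases gs') auto
    qed
    ultimately show ?thesis using Cn by simp
  qed (auto simp: prod_encode_eq)
next
  case (Pr f g) then show ?case by (cases r') (auto simp: prod_encode_eq)
next
  case (Mn f) then show ?case by (cases r') (auto simp: prod_encode_eq)
qed

lemma W_code: "W (code r) = {x. \<exists>y. eval r [x] y}"
  unfolding W_def using code_inj by blast

definition cmp :: "nat \<Rightarrow> (nat list \<Rightarrow> nat) \<Rightarrow> bool" where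
  "cmp k f \<longleftrightarrow> (\<exists>r. \<forall>xs. length xs = k \<longrightarrow> eval r xs (f xs))"

lemma cmp_cong: "cmp k f \<Longrightarrow> (\<And>xs. length xs = k \<Longrightarrow> f xs = g xs) \<Longrightarrow> cmp k g"
  unfolding cmp_def by metis

lemma cmp_proj: "i < k \<Longrightarrow> cmp k (\<lambda>xs. xs ! i)"
  unfolding cmp_def by (auto intro!: exI[of _ "recf.Id i"] eval_Id)

lemma cmp_const: "cmp k (\<lambda>xs. n)"
proof (induction n)
  case 0 then show ?case unfolding cmp_def by (auto intro: eval_Z)
next
  case (Suc n)
  then obtain r where r: "\<forall>xs. length xs = k \<longrightarrow> eval r xs n" unfolding cmp_def by blast
  have "eval (Cn S [r]) xs (Suc n)" if "length xs = k" for xs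
    by (rule eval_Cn[where ys="[n]"]) (auto simp: r that intro: eval_S)
  then show ?case unfolding cmp_def by blast
qed

lemma cmp_comp:
  assumes F: "cmp m F" and G: "\<And>i. i < m \<Longrightarrow> cmp k (G i)"
  shows "cmp k (\<lambda>xs. F (map (\<lambda>i. G i xs) [0..<m]))"
proof -
  obtain rF where rF: "\<forall>ys. length ys = m \<longrightarrow> eval rF ys (F ys)" using F unfolding cmp_def by blast
  have "\<forall>i. \<exists>r. i < m \<longrightarrow> (\<forall>xs. length xs = k \<longrightarrow> eval r xs (G i xs))"
    using G unfolding cmp_def by blast
  then obtain rs where rs: "\<And>i xs. i < m \<Longrightarrow> length xs = k \<Longrightarrow> eval (rs i) xs (G i xs)" by metis
  have "eval (Cn rF (map rs [0..<m])) xs (F (map (\<lambda>i. G i xs) [0..<m]))" if "length xs = k" for xs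
  proof (rule eval_Cn)
    show "list_all2 (\<lambda>g y. eval g xs y) (map rs [0..<m]) (map (\<lambda>i. G i xs) [0..<m])"
      by (auto simp: list_all2_conv_all_nth rs that)
    show "eval rF (map (\<lambda>i. G i xs) [0..<m]) (F (map (\<lambda>i. G i xs) [0..<m]))"
      using rF by simp
  qed
  then show ?thesis unfolding cmp_def by blast
qed

lemma cmp_comp1: "cmp 1 F \<Longrightarrow> cmp k G \<Longrightarrow> cmp k (\<lambda>xs. F [G xs])"
  using cmp_comp[of 1 F k "\<lambda>i. G"] by simp

lemma cmp_comp2: "cmp 2 F \<Longrightarrow> cmp k G1 \<Longrightarrow> cmp k G2 \<Longrightarrow> cmp k (\<lambda>xs. F [G1 xs, G2 xs])"
  using cmp_comp[of 2 F k "\<lambda>i. if i = 0 then G1 else G2"] by (simp add: upt_rec)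

lemma cmp_comp3: "cmp 3 F \<Longrightarrow> cmp k G1 \<Longrightarrow> cmp k G2 \<Longrightarrow> cmp k G3 \<Longrightarrow> cmp k (\<lambda>xs. F [G1 xs, G2 xs, G3 xs])"
  using cmp_comp[of 3 F k "\<lambda>i. if i = 0 then G1 else if i = 1 then G2 else G3"]
  by (simp add: upt_rec)

lemma cmp_cons_subst: "cmp (Suc k) F \<Longrightarrow> cmp k B \<Longrightarrow> cmp k (\<lambda>xs. F (B xs # xs))"
proof -
  assume F: "cmp (Suc k) F" and B: "cmp k B"
  have "cmp k (\<lambda>xs. F (map (\<lambda>i. (if i = 0 then B else (\<lambda>xs. xs ! (i - 1))) xs) [0..<Suc k]))"
    by (rule cmp_comp[OF F]) (auto intro: B cmp_proj)
  then show ?thesis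
  proof (rule cmp_cong)
    fix xs :: "nat list" assume "length xs = k"
    then have "map (\<lambda>i. (if i = 0 then B else (\<lambda>xs. xs ! (i - 1))) xs) [0..<Suc k] = B xs # xs"
      by (intro nth_equalityI) (auto simp del: upt_Suc simp: nth_Cons')
    then show "F (map (\<lambda>i. (if i = 0 then B else (\<lambda>xs. xs ! (i - 1))) xs) [0..<Suc k]) = F (B xs # xs)"
      by simp
  qed
qed

lemma cmp_drop2: "cmp (Suc k) F \<Longrightarrow> cmp (Suc (Suc k)) (\<lambda>ys. F (hd ys # drop 2 ys))"
proof -
  assume F: "cmp (Suc k) F"
  have "cmp (Suc (Suc k)) (\<lambda>ys. F (map (\<lambda>i. (\<lambda>ys. ys ! (if i = 0 then 0 else Suc i)) ys) [0..<Suc k]))"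
    by (rule cmp_comp[OF F]) (auto intro: cmp_proj)
  then show ?thesis
  proof (rule cmp_cong)
    fix ys :: "nat list" assume l: "length ys = Suc (Suc k)"
    then have "hd ys = ys ! 0" by (cases ys) auto
    with l have "map (\<lambda>i. ys ! (if i = 0 then 0 else Suc i)) [0..<Suc k] = hd ys # drop 2 ys"
      by (intro nth_equalityI) (auto simp del: upt_Suc simp: nth_Cons' hd_conv_nth)
    then show "F (map (\<lambda>i. (\<lambda>ys. ys ! (if i = 0 then 0 else Suc i)) ys) [0..<Suc k]) = F (hd ys # drop 2 ys)"
      by simp
  qed
qed

fun prec :: "(nat list \<Rightarrow> nat) \<Rightarrow> (nat list \<Rightarrow> nat) \<Rightarrow> nat \<Rightarrow> nat list \<Rightarrow> nat" where
  "prec F G 0 xs = F xs"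
| "prec F G (Suc n) xs = G (n # prec F G n xs # xs)"

lemma cmp_Pr:
  assumes F: "cmp k F" and G: "cmp (Suc (Suc k)) G"
  shows "cmp (Suc k) (\<lambda>xs. prec F G (hd xs) (tl xs))"
proof -
  obtain rF where rF: "\<forall>ys. length ys = k \<longrightarrow> eval rF ys (F ys)" using F unfolding cmp_def by blast
  obtain rG where rG: "\<forall>ys. length ys = Suc (Suc k) \<longrightarrow> eval rG ys (G ys)" using G unfolding cmp_def by blast
  have "eval (Pr rF rG) (n # xs) (prec F G n xs)" if "length xs = k" for n xs
  proof (induction n)
    case 0 then show ?case using rF that by (auto intro: eval_Pr0)
  next
    case (Suc n) then show ?case using rG that by (auto intro: eval_PrS)
  qed
  then have "eval (Pr rF rG) xs (prec F G (hd xs) (tl xs))" if "length xs = Suc k" for xs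
    using that by (cases xs) auto
  then show ?thesis unfolding cmp_def by blast
qed

lemma len1: "length xs = 1 \<Longrightarrow> xs = [xs!0]"
  by (cases xs) auto
lemma len2: "length xs = 2 \<Longrightarrow> xs = [xs!0, xs!1]"
  by (cases xs; cases "tl xs") auto
lemma len3: "length xs = 3 \<Longrightarrow> xs = [xs!0, xs!1, xs!2]"
  by (cases xs; cases "tl xs"; cases "tl (tl xs)") (auto simp: numeral_3_eq_3)

lemma cmp_cong1: assumes "cmp (Suc 0) f" "\<And>a. f [a] = g [a]" shows "cmp 1 g"
proof -
  have "cmp 1 f" using assms(1) by simp
  then show ?thesis
  proof (rule cmp_cong)
    fix xs :: "nat list" assume "length xs = 1"
    then have "xs = [xs!0]" by (rule len1)
    then show "f xs = g xs" by (metis assms(2))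
  qed
qed
lemma cmp_cong2: assumes "cmp (Suc (Suc 0)) f" "\<And>a b. f [a, b] = g [a, b]" shows "cmp 2 g"
proof -
  have "cmp 2 f" using assms(1) by (simp add: numeral_2_eq_2)
  then show ?thesis
  proof (rule cmp_cong)
    fix xs :: "nat list" assume "length xs = 2"
    then have "xs = [xs!0, xs!1]" by (rule len2)
    then show "f xs = g xs" by (metis assms(2))
  qed
qed
lemma cmp_cong3: assumes "cmp (Suc (Suc (Suc 0))) f" "\<And>a b c. f [a, b, c] = g [a, b, c]" shows "cmp 3 g"
proof -
  have "cmp 3 f" using assms(1) by (simp add: numeral_3_eq_3)
  then show ?thesis
  proof (rule cmp_cong)
    fix xs :: "nat list" assume "length xs = 3"
    then have "xs = [xs!0, xs!1, xs!2]" by (rule len3)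
    then show "f xs = g xs" by (metis assms(2))
  qed
qed

lemma cmp_S1: "cmp 1 (\<lambda>xs. Suc (xs ! 0))"
  unfolding cmp_def
proof (intro exI allI impI)
  fix xs :: "nat list" assume "length xs = 1"
  then have "xs = [xs!0]" by (rule len1)
  then show "eval S xs (Suc (xs ! 0))" by (metis eval_S)
qed

lemma cmp_suc: "cmp k G \<Longrightarrow> cmp k (\<lambda>xs. Suc (G xs))"
  using cmp_comp1[OF cmp_S1] by simp

lemma cmp_add2: "cmp 2 (\<lambda>xs. xs ! 0 + xs ! 1)"
proof -
  have A: "cmp (Suc (Suc 0)) (\<lambda>xs. prec (\<lambda>ys. ys ! 0) (\<lambda>ys. Suc (ys ! 1)) (hd xs) (tl xs))"
    by (intro cmp_Pr cmp_proj cmp_suc) auto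
  have B: "prec (\<lambda>ys. ys ! 0) (\<lambda>ys. Suc (ys ! 1)) n [y] = n + y" for n y
    by (induction n) auto
  show ?thesis by (rule cmp_cong2[OF A], simp only: list.sel(1) list.sel(3) B, simp)
qed

lemma cmp_add: "cmp k G \<Longrightarrow> cmp k H \<Longrightarrow> cmp k (\<lambda>xs. G xs + H xs)"
  using cmp_comp2[OF cmp_add2] by simp

lemma cmp_mult2: "cmp 2 (\<lambda>xs. xs ! 0 * xs ! 1)"
proof -
  have A: "cmp (Suc (Suc 0)) (\<lambda>xs. prec (\<lambda>ys. 0) (\<lambda>ys. ys ! 1 + ys ! 2) (hd xs) (tl xs))"
    by (intro cmp_Pr cmp_proj cmp_add cmp_const) auto
  have B: "prec (\<lambda>ys. 0) (\<lambda>ys. ys ! 1 + ys ! 2) n [y] = n * y" for n y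
    by (induction n) auto
  show ?thesis by (rule cmp_cong2[OF A], simp only: list.sel(1) list.sel(3) B, simp)
qed

lemma cmp_mult: "cmp k G \<Longrightarrow> cmp k H \<Longrightarrow> cmp k (\<lambda>xs. G xs * H xs)"
  using cmp_comp2[OF cmp_mult2] by simp

lemma cmp_monus2: "cmp 2 (\<lambda>xs. xs ! 1 - xs ! 0)"
proof -
  have p: "cmp 1 (\<lambda>xs. xs ! 0 - 1)"
  proof -
    have A: "cmp (Suc 0) (\<lambda>xs. prec (\<lambda>ys. 0) (\<lambda>ys. ys ! 0) (hd xs) (tl xs))"
      by (intro cmp_Pr cmp_proj cmp_const) auto
    have B: "prec (\<lambda>ys. 0) (\<lambda>ys. ys ! 0) n [] = n - 1" for n
      by (induction n) auto
    show ?thesis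
      by (rule cmp_cong1[OF A], simp only: list.sel(1) list.sel(3) B, simp)
  qed
  have g: "cmp (Suc (Suc (Suc 0))) (\<lambda>ys. ys ! 1 - 1)"
    using cmp_comp1[OF p cmp_proj[of 1 "Suc (Suc (Suc 0))"]] by simp
  have A: "cmp (Suc (Suc 0)) (\<lambda>xs. prec (\<lambda>ys. ys ! 0) (\<lambda>ys. ys ! 1 - 1) (hd xs) (tl xs))"
    by (intro cmp_Pr cmp_proj g) auto
  have B: "prec (\<lambda>ys. ys ! 0) (\<lambda>ys. ys ! 1 - 1) n [y] = y - n" for n y
    by (induction n) auto
  show ?thesis by (rule cmp_cong2[OF A], simp only: list.sel(1) list.sel(3) B, simp)
qed

lemma cmp_monus: "cmp k G \<Longrightarrow> cmp k H \<Longrightarrow> cmp k (\<lambda>xs. G xs - H xs)"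
  using cmp_comp2[OF cmp_monus2, of k H G] by simp

lemma cmp_ifz3: "cmp 3 (\<lambda>xs. if xs ! 0 = 0 then xs ! 1 else xs ! 2)"
proof -
  have A: "cmp (Suc (Suc (Suc 0))) (\<lambda>xs. prec (\<lambda>ys. ys ! 0) (\<lambda>ys. ys ! 3) (hd xs) (tl xs))"
    by (intro cmp_Pr cmp_proj) auto
  have B: "prec (\<lambda>ys. ys ! 0) (\<lambda>ys. ys ! 3) n [a, b] = (if n = 0 then a else b)" for n a b
    by (cases n) auto
  show ?thesis by (rule cmp_cong3[OF A], simp only: list.sel(1) list.sel(3) B, simp)
qed

lemma cmp_ifz: assumes "cmp k C" "cmp k A" "cmp k B" shows "cmp k (\<lambda>xs. if C xs = 0 then A xs else B xs)"
  by (rule cmp_cong[OF cmp_comp3[OF cmp_ifz3 assms]]) (simp add: nth_Cons')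

definition dec :: "nat \<Rightarrow> (nat list \<Rightarrow> bool) \<Rightarrow> bool" where
  "dec k P \<longleftrightarrow> cmp k (\<lambda>xs. if P xs then 0 else 1)"

lemma cmp_if: "dec k P \<Longrightarrow> cmp k A \<Longrightarrow> cmp k B \<Longrightarrow> cmp k (\<lambda>xs. if P xs then A xs else B xs)"
  unfolding dec_def by (rule cmp_cong[OF cmp_ifz[of k "\<lambda>xs. if P xs then 0 else 1" A B]]) auto

lemma dec_cong: "dec k P \<Longrightarrow> (\<And>xs. length xs = k \<Longrightarrow> P xs = Q xs) \<Longrightarrow> dec k Q"
  unfolding dec_def by (erule cmp_cong) auto

lemma dec_eq: "cmp k A \<Longrightarrow> cmp k B \<Longrightarrow> dec k (\<lambda>xs. A xs = B xs)"
  unfolding dec_def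
  by (rule cmp_cong[OF cmp_ifz[of k "\<lambda>xs. (A xs - B xs) + (B xs - A xs)" "\<lambda>_. 0" "\<lambda>_. 1"]])
     (auto intro: cmp_add cmp_monus cmp_const)

lemma dec_le: "cmp k A \<Longrightarrow> cmp k B \<Longrightarrow> dec k (\<lambda>xs. A xs \<le> B xs)"
  unfolding dec_def
  by (rule cmp_cong[OF cmp_ifz[of k "\<lambda>xs. A xs - B xs" "\<lambda>_. 0" "\<lambda>_. 1"]])
     (auto intro: cmp_monus cmp_const)

lemma dec_lt: "cmp k A \<Longrightarrow> cmp k B \<Longrightarrow> dec k (\<lambda>xs. A xs < B xs)"
  using dec_le[of k "\<lambda>xs. Suc (A xs)" B] by (simp add: cmp_suc Suc_le_eq)

lemma dec_conj: "dec k P \<Longrightarrow> dec k Q \<Longrightarrow> dec k (\<lambda>xs. P xs \<and> Q xs)"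
  unfolding dec_def
  by (rule cmp_cong[OF cmp_if[of k P "\<lambda>xs. if Q xs then 0 else 1" "\<lambda>_. 1"]])
     (auto intro: cmp_const simp: dec_def)

lemma dec_disj: "dec k P \<Longrightarrow> dec k Q \<Longrightarrow> dec k (\<lambda>xs. P xs \<or> Q xs)"
  unfolding dec_def
  by (rule cmp_cong[OF cmp_if[of k P "\<lambda>_. 0" "\<lambda>xs. if Q xs then 0 else 1"]])
     (auto intro: cmp_const simp: dec_def)

lemma dec_not: "dec k P \<Longrightarrow> dec k (\<lambda>xs. \<not> P xs)"
  unfolding dec_def
  by (rule cmp_cong[OF cmp_if[of k P "\<lambda>_. 1" "\<lambda>_. 0"]])
     (auto intro: cmp_const simp: dec_def)

lemma dec_const: "dec k (\<lambda>xs. b)"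
  unfolding dec_def by (cases b) (auto intro: cmp_const)

lemma dec_imp: "dec k P \<Longrightarrow> dec k Q \<Longrightarrow> dec k (\<lambda>xs. P xs \<longrightarrow> Q xs)"
  using dec_disj[OF dec_not] by simp

lemma dec_cons_subst: "dec (Suc k) P \<Longrightarrow> cmp k B \<Longrightarrow> dec k (\<lambda>xs. P (B xs # xs))"
  unfolding dec_def using cmp_cons_subst by fast

lemma dec_all_lt_aux:
  assumes Q: "dec (Suc k) Q"
  shows "dec (Suc k) (\<lambda>ys. \<forall>i<hd ys. Q (i # tl ys))"
proof -
  define G where "G = (\<lambda>ys::nat list. if ys ! 1 = 0 \<and> Q (hd ys # drop 2 ys) then 0 else (1::nat))"
  have "cmp (Suc k) (\<lambda>xs. prec (\<lambda>_. 0) G (hd xs) (tl xs))"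
  proof (rule cmp_Pr[OF cmp_const])
    have d: "dec (Suc (Suc k)) (\<lambda>ys. Q (hd ys # drop 2 ys))"
      using cmp_drop2[OF Q[unfolded dec_def]] unfolding dec_def by simp
    show "cmp (Suc (Suc k)) G" unfolding G_def
      by (rule cmp_if[OF dec_conj[OF dec_eq d]]) (auto intro: cmp_proj cmp_const)
  qed
  moreover have "prec (\<lambda>_. 0) G n xs = (if \<forall>i<n. Q (i # xs) then 0 else 1)" for n xs
    by (induction n) (auto simp: G_def less_Suc_eq)
  ultimately show ?thesis unfolding dec_def by (rule cmp_cong)
qed

lemma dec_all_lt:
  assumes "dec (Suc k) Q" "cmp k B" "\<And>i xs. length xs = k \<Longrightarrow> Q (i # xs) = P i xs"
  shows "dec k (\<lambda>xs. \<forall>i<B xs. P i xs)"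
  using dec_cons_subst[OF dec_all_lt_aux[OF assms(1)] assms(2)]
  by (rule dec_cong) (simp add: assms(3))

lemma dec_ex_lt:
  assumes "dec (Suc k) Q" "cmp k B" "\<And>i xs. length xs = k \<Longrightarrow> Q (i # xs) = P i xs"
  shows "dec k (\<lambda>xs. \<exists>i<B xs. P i xs)"
proof -
  have "dec k (\<lambda>xs. \<not> (\<forall>i<B xs. \<not> P i xs))"
    by (rule dec_not, rule dec_all_lt[OF dec_not[OF assms(1)] assms(2)]) (simp add: assms(3))
  then show ?thesis by simp
qed

fun bs :: "(nat list \<Rightarrow> nat) \<Rightarrow> nat \<Rightarrow> nat list \<Rightarrow> nat" where
  "bs F 0 xs = 0"
| "bs F (Suc n) xs = (if bs F n xs < n then bs F n xs else if F (n # xs) = 0 then n else Suc n)"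

lemma bs_spec: "bs F n xs \<le> n \<and> (bs F n xs < n \<longrightarrow> F (bs F n xs # xs) = 0)
   \<and> (\<forall>j<bs F n xs. F (j # xs) \<noteq> 0)"
  by (induction n) (auto simp: less_Suc_eq)

lemma bs_eqI: "m < n \<Longrightarrow> F (m # xs) = 0 \<Longrightarrow> (\<forall>j<m. F (j # xs) \<noteq> 0) \<Longrightarrow> bs F n xs = m"
  using bs_spec[of F n xs] by (metis linorder_neqE_nat order_le_less)

lemma cmp_bs:
  assumes F: "cmp (Suc k) F"
  shows "cmp (Suc k) (\<lambda>ys. bs F (hd ys) (tl ys))"
proof -
  define G where "G = (\<lambda>ys::nat list. if ys ! 1 < ys ! 0 then ys ! 1 else if F (hd ys # drop 2 ys) = 0 then ys ! 0 else Suc (ys ! 0))"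
  have "cmp (Suc k) (\<lambda>xs. prec (\<lambda>_. 0) G (hd xs) (tl xs))"
  proof (rule cmp_Pr[OF cmp_const])
    have d: "cmp (Suc (Suc k)) (\<lambda>ys. F (hd ys # drop 2 ys))"
      using cmp_drop2[OF F] by simp
    show "cmp (Suc (Suc k)) G" unfolding G_def
      by (intro cmp_if dec_lt dec_eq d cmp_proj cmp_const cmp_suc) auto
  qed
  moreover have "prec (\<lambda>_. 0) G n xs = bs F n xs" for n xs
    by (induction n) (auto simp: G_def)
  ultimately show ?thesis by simp
qed

lemma cmp_bs_subst:
  assumes "cmp (Suc k) F" "cmp k B"
  shows "cmp k (\<lambda>xs. bs F (B xs) xs)"
  using cmp_cons_subst[OF cmp_bs[OF assms(1)] assms(2)] by simp

lemma cmp_tri1: "cmp 1 (\<lambda>xs. triangle (xs ! 0))"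
proof -
  have A: "cmp (Suc 0) (\<lambda>xs. prec (\<lambda>ys. 0) (\<lambda>ys. ys ! 1 + Suc (ys ! 0)) (hd xs) (tl xs))"
    by (intro cmp_Pr cmp_const cmp_add cmp_suc cmp_proj) auto
  have B: "prec (\<lambda>ys. 0) (\<lambda>ys. ys ! 1 + Suc (ys ! 0)) n [] = triangle n" for n
    by (induction n) auto
  show ?thesis by (rule cmp_cong1[OF A], simp only: list.sel(1) list.sel(3) B, simp)
qed

lemma cmp_tri: "cmp k A \<Longrightarrow> cmp k (\<lambda>xs. triangle (A xs))"
  using cmp_comp1[OF cmp_tri1] by simp

lemma cmp_pe: assumes "cmp k A" "cmp k B" shows "cmp k (\<lambda>xs. prod_encode (A xs, B xs))"
proof -
  have "(\<lambda>xs. prod_encode (A xs, B xs)) = (\<lambda>xs. triangle (A xs + B xs) + A xs)"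
    by (simp add: prod_encode_def)
  moreover have "cmp k (\<lambda>xs. triangle (A xs + B xs) + A xs)"
    by (intro cmp_add cmp_tri assms)
  ultimately show ?thesis by simp
qed

definition sdiag :: "nat \<Rightarrow> nat" where
  "sdiag n = bs (\<lambda>ys. Suc (ys ! 1) - triangle (Suc (ys ! 0))) (Suc n) [n]"

lemma triangle_ge: "n \<le> triangle n"
  by (induction n) auto

lemma sdiag_spec: "triangle (sdiag n) \<le> n \<and> n < triangle (Suc (sdiag n))"
proof -
  define s where "s = (LEAST s. n < triangle (Suc s))"
  have ex: "n < triangle (Suc n)" using triangle_ge[of n] by simp
  have s1: "n < triangle (Suc s)" unfolding s_def by (rule LeastI[of _ n]) (rule ex)
  have s2: "\<And>j. j < s \<Longrightarrow> \<not> n < triangle (Suc j)" unfolding s_def by (rule not_less_Least)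
  have sn: "s \<le> n" unfolding s_def by (rule Least_le) (rule ex)
  have "sdiag n = s" unfolding sdiag_def
  proof (rule bs_eqI)
    show "s < Suc n" using sn by simp
    show "Suc ([s, n] ! 1) - triangle (Suc ([s, n] ! 0)) = 0" using s1 by simp
    show "\<forall>j<s. Suc ([j, n] ! 1) - triangle (Suc ([j, n] ! 0)) \<noteq> 0"
    proof (intro allI impI)
      fix j assume "j < s"
      then have "\<not> n < triangle (Suc j)" by (rule s2)
      then show "Suc ([j, n] ! 1) - triangle (Suc ([j, n] ! 0)) \<noteq> 0" by simp
    qed
  qed
  moreover have "triangle s \<le> n"
  proof (cases s)
    case 0 then show ?thesis by simp
  next
    case (Suc j) then show ?thesis using s2[of j] by simp
  qed
  ultimately show ?thesis using s1 by simp
qed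

lemma pd_char: "prod_decode n = (n - triangle (sdiag n), sdiag n - (n - triangle (sdiag n)))"
proof -
  let ?s = "sdiag n"
  have a: "triangle ?s \<le> n" "n < triangle ?s + Suc ?s" using sdiag_spec[of n] by auto
  have "prod_encode (n - triangle ?s, ?s - (n - triangle ?s)) = n"
    unfolding prod_encode_def using a by simp
  then show ?thesis by (metis prod_encode_inverse)
qed

lemma cmp_sdiag1: "cmp 1 (\<lambda>xs. sdiag (xs ! 0))"
proof -
  have "cmp 1 (\<lambda>xs. bs (\<lambda>ys. Suc (ys ! 1) - triangle (Suc (ys ! 0))) (Suc (xs ! 0)) xs)"
    by (rule cmp_bs_subst; (intro cmp_monus cmp_suc cmp_tri cmp_proj)?; simp)
  then show ?thesis
  proof (rule cmp_cong)
    fix xs :: "nat list" assume "length xs = 1"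
    then have "xs = [xs ! 0]" by (rule len1)
    then show "bs (\<lambda>ys. Suc (ys ! 1) - triangle (Suc (ys ! 0))) (Suc (xs ! 0)) xs = sdiag (xs ! 0)"
      unfolding sdiag_def by metis
  qed
qed

lemma cmp_sdiag: "cmp k A \<Longrightarrow> cmp k (\<lambda>xs. sdiag (A xs))"
  using cmp_comp1[OF cmp_sdiag1] by simp

lemma cmp_fst_pd: "cmp k A \<Longrightarrow> cmp k (\<lambda>xs. fst (prod_decode (A xs)))"
  by (subst pd_char) (simp add: cmp_monus cmp_tri cmp_sdiag)

lemma cmp_snd_pd: "cmp k A \<Longrightarrow> cmp k (\<lambda>xs. snd (prod_decode (A xs)))"
  by (subst pd_char) (simp add: cmp_monus cmp_tri cmp_sdiag)

definition hdc :: "nat \<Rightarrow> nat" where "hdc c = fst (prod_decode (c - 1))"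
definition tlc :: "nat \<Rightarrow> nat" where "tlc c = snd (prod_decode (c - 1))"

lemma hdc_Cons[simp]: "hdc (list_encode (x # xs)) = x" by (simp add: hdc_def)
lemma tlc_Cons[simp]: "tlc (list_encode (x # xs)) = list_encode xs" by (simp add: tlc_def)
lemma pd0: "prod_decode 0 = (0, 0)"
proof -
  have "prod_encode (0, 0) = 0" by (simp add: prod_encode_def)
  then show ?thesis by (metis prod_encode_inverse)
qed
lemma tlc_0[simp]: "tlc 0 = 0"
  by (simp add: tlc_def pd0)
lemma tlc_Nil[simp]: "tlc (list_encode []) = list_encode []"
  by simp

lemma cmp_hdc: "cmp k A \<Longrightarrow> cmp k (\<lambda>xs. hdc (A xs))"
  unfolding hdc_def by (intro cmp_fst_pd cmp_monus cmp_const)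
lemma cmp_tlc: "cmp k A \<Longrightarrow> cmp k (\<lambda>xs. tlc (A xs))"
  unfolding tlc_def by (intro cmp_snd_pd cmp_monus cmp_const)

lemma tlc_iter: "(tlc ^^ i) (list_encode xs) = list_encode (drop i xs)"
proof (induction i arbitrary: xs)
  case 0 then show ?case by simp
next
  case (Suc i)
  have "(tlc ^^ Suc i) (list_encode xs) = (tlc ^^ i) (tlc (list_encode xs))"
    by (simp add: funpow_swap1)
  also have "tlc (list_encode xs) = list_encode (drop 1 xs)"
    by (cases xs) (simp_all del: list_encode.simps)
  finally show ?case using Suc by simp
qed

lemma cmp_iter2: "cmp 2 (\<lambda>xs. (tlc ^^ (xs ! 0)) (xs ! 1))"
proof -
  have A: "cmp (Suc (Suc 0)) (\<lambda>xs. prec (\<lambda>ys. ys ! 0) (\<lambda>ys. tlc (ys ! 1)) (hd xs) (tl xs))"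
    by (intro cmp_Pr cmp_proj cmp_tlc) auto
  have B: "prec (\<lambda>ys. ys ! 0) (\<lambda>ys. tlc (ys ! 1)) n [c] = (tlc ^^ n) c" for n c
    by (induction n) auto
  show ?thesis by (rule cmp_cong2[OF A], simp only: list.sel(1) list.sel(3) B, simp)
qed

lemma cmp_iter: "cmp k N \<Longrightarrow> cmp k A \<Longrightarrow> cmp k (\<lambda>xs. (tlc ^^ N xs) (A xs))"
  using cmp_comp2[OF cmp_iter2] by simp

definition lenc :: "nat \<Rightarrow> nat" where
  "lenc c = bs (\<lambda>ys. (tlc ^^ (ys ! 0)) (ys ! 1)) (Suc c) [c]"

lemma length_le_encode: "length xs \<le> list_encode xs"
proof (induction xs)
  case Nil then show ?case by simp
next
  case (Cons a xs)
  then show ?case using le_prod_encode_2[of "list_encode xs" a] by simp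
qed

lemma lenc_encode[simp]: "lenc (list_encode xs) = length xs"
  unfolding lenc_def
proof (rule bs_eqI)
  show "length xs < Suc (list_encode xs)" using length_le_encode[of xs] by simp
  show "(tlc ^^ ([length xs, list_encode xs] ! 0)) ([length xs, list_encode xs] ! 1) = 0"
    by (simp add: tlc_iter)
  show "\<forall>j<length xs. (tlc ^^ ([j, list_encode xs] ! 0)) ([j, list_encode xs] ! 1) \<noteq> 0"
  proof (intro allI impI)
    fix j assume "j < length xs"
    then obtain y ys where "drop j xs = y # ys" by (metis Cons_nth_drop_Suc)
    then show "(tlc ^^ ([j, list_encode xs] ! 0)) ([j, list_encode xs] ! 1) \<noteq> 0"
      by (simp add: tlc_iter)
  qed
qed

lemma cmp_lenc1: "cmp 1 (\<lambda>xs. lenc (xs ! 0))"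
proof -
  have "cmp 1 (\<lambda>xs. bs (\<lambda>ys. (tlc ^^ (ys ! 0)) (ys ! 1)) (Suc (xs ! 0)) xs)"
    by (rule cmp_bs_subst; (intro cmp_iter cmp_suc cmp_proj)?; simp)
  then show ?thesis
  proof (rule cmp_cong)
    fix xs :: "nat list" assume "length xs = 1"
    then have "xs = [xs ! 0]" by (rule len1)
    then show "bs (\<lambda>ys. (tlc ^^ (ys ! 0)) (ys ! 1)) (Suc (xs ! 0)) xs = lenc (xs ! 0)"
      unfolding lenc_def by metis
  qed
qed

lemma cmp_lenc: "cmp k A \<Longrightarrow> cmp k (\<lambda>xs. lenc (A xs))"
  using cmp_comp1[OF cmp_lenc1] by simp

definition nthc :: "nat \<Rightarrow> nat \<Rightarrow> nat" where "nthc c i = hdc ((tlc ^^ i) c)"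

lemma nthc_encode: "i < length xs \<Longrightarrow> nthc (list_encode xs) i = xs ! i"
  unfolding nthc_def tlc_iter by (metis Cons_nth_drop_Suc hdc_Cons)

lemma cmp_nthc: "cmp k C \<Longrightarrow> cmp k I \<Longrightarrow> cmp k (\<lambda>xs. nthc (C xs) (I xs))"
  unfolding nthc_def by (intro cmp_hdc cmp_iter)

fun TK :: "nat \<Rightarrow> nat \<Rightarrow> nat \<Rightarrow> nat" where
  "TK c k 0 = 0"
| "TK c k (Suc j) = Suc (prod_encode (nthc c (k - Suc j), TK c k j))"

lemma cmp_TK3: "cmp 3 (\<lambda>xs. TK (xs ! 1) (xs ! 2) (xs ! 0))"
proof -
  have A: "cmp (Suc (Suc (Suc 0))) (\<lambda>xs. prec (\<lambda>ys. 0)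
       (\<lambda>ys. Suc (prod_encode (nthc (ys ! 2) (ys ! 3 - Suc (ys ! 0)), ys ! 1))) (hd xs) (tl xs))"
    by (intro cmp_Pr cmp_const cmp_suc cmp_pe cmp_nthc cmp_monus cmp_proj) auto
  have B: "prec (\<lambda>ys. 0) (\<lambda>ys. Suc (prod_encode (nthc (ys ! 2) (ys ! 3 - Suc (ys ! 0)), ys ! 1))) n [c, k]
     = TK c k n" for n c k
    by (induction n) auto
  show ?thesis by (rule cmp_cong3[OF A], simp only: list.sel(1) list.sel(3) B, simp)
qed

definition takec :: "nat \<Rightarrow> nat \<Rightarrow> nat" where
  "takec c k = TK c (min k (lenc c)) (min k (lenc c))"

lemma TK_encode: "k \<le> length xs \<Longrightarrow> j \<le> k \<Longrightarrow> TK (list_encode xs) k j = list_encode (drop (k - j) (take k xs))"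
proof (induction j)
  case 0 then show ?case by simp
next
  case (Suc j)
  have i: "k - Suc j < length (take k xs)" using Suc.prems by simp
  have "drop (k - Suc j) (take k xs) = (take k xs) ! (k - Suc j) # drop (Suc (k - Suc j)) (take k xs)"
    using i by (rule Cons_nth_drop_Suc[symmetric])
  moreover have "Suc (k - Suc j) = k - j" using Suc.prems by simp
  moreover have "(take k xs) ! (k - Suc j) = xs ! (k - Suc j)" using Suc.prems by simp
  ultimately show ?case using Suc by (simp add: nthc_encode)
qed

lemma takec_encode[simp]: "takec (list_encode xs) k = list_encode (take k xs)"
proof -
  have "takec (list_encode xs) k = list_encode (take (min k (length xs)) xs)"
    unfolding takec_def by (simp add: TK_encode)
  then show ?thesis by (simp add: min_def)
qed

lemma cmp_takec: "cmp k C \<Longrightarrow> cmp k K \<Longrightarrow> cmp k (\<lambda>xs. takec (C xs) (K xs))"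
proof -
  assume C: "cmp k C" and K: "cmp k K"
  have m: "cmp k (\<lambda>xs. min (K xs) (lenc (C xs)))" unfolding min_def
    by (intro cmp_if dec_le K cmp_lenc C)
  show ?thesis unfolding takec_def
    using cmp_comp3[OF cmp_TK3 m C m] by simp
qed

definition pre :: "nat \<Rightarrow> nat \<Rightarrow> bool" where "pre c d \<longleftrightarrow> takec d (lenc c) = c"
definition gd :: "(nat \<Rightarrow> nat) \<Rightarrow> nat \<Rightarrow> nat \<Rightarrow> bool" where
  "gd R p c \<longleftrightarrow> (\<forall>i<Suc (lenc c). R (prod_encode (p, takec c i)) \<noteq> 0)"

lemma pre_enc[simp]: "pre (list_encode s) (list_encode t) \<longleftrightarrow> pf s t"
  unfolding pre_def pf_def by (auto simp: list_encode_eq)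

lemma gd_enc[simp]: "gd R p (list_encode t) \<longleftrightarrow> good R p t"
  unfolding gd_def good_def by (auto simp: less_Suc_eq_le)

definition Edge :: "(nat \<Rightarrow> nat) \<Rightarrow> (nat \<Rightarrow> nat) \<Rightarrow> (nat \<Rightarrow> nat) \<Rightarrow> nat \<Rightarrow> nat \<Rightarrow> nat \<Rightarrow> bool" where
  "Edge R1 R2 R3 p i j \<longleftrightarrow>
    (let t = fst (prod_decode i); d = snd (prod_decode i); t' = fst (prod_decode j); d' = snd (prod_decode j);
         m = fst (prod_decode d); c = snd (prod_decode d); m' = fst (prod_decode d'); c' = snd (prod_decode d') in
     (t = 0 \<and> t' = 0 \<and> pre d d' \<and> d \<noteq> d' \<and> gd R1 p d') \<or>
     (t = 2 \<and> t' = 2 \<and> m = m' \<and> pre c c' \<and> c \<noteq> c' \<and> gd R1 p c') \<or>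
     (t = 2 \<and> t' = 3 \<and> m = m' \<and> pre c c') \<or>
     (t = 0 \<and> t' = 3 \<and> pre d (takec c' m')) \<or>
     (t = 3 \<and> t' = 3 \<and> d = d') \<or>
     (t = 4 \<and> t' = 4 \<and> pre d d' \<and> d \<noteq> d' \<and> gd R2 p d') \<or>
     (t = 5 \<and> t' = 5 \<and> pre d d' \<and> d \<noteq> d' \<and> gd R2 p d') \<or>
     (t = 4 \<and> t' = 6 \<and> pre d d') \<or>
     (t = 5 \<and> t' = 6 \<and> pre d d') \<or>
     (t = 6 \<and> t' = 6 \<and> d = d') \<or>
     (t = 7 \<and> t' = 7 \<and> pre d d' \<and> d \<noteq> d' \<and> gd R3 p d') \<or>
     (t = 7 \<and> t' = 8) \<or>
     (t = 8 \<and> t' = 8 \<and> d = d') \<or>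
     ((t = 1 \<or> 9 \<le> t) \<and> t' = t \<and> d = d'))"

lemma RL_Edge: "(i, j) \<in> RL R1 R2 R3 p \<Longrightarrow> Edge R1 R2 R3 p i j"
  by (erule RL.cases) (auto simp: Edge_def sp_def)

lemma Edge_RL:
  assumes E: "Edge R1 R2 R3 p i j" shows "(i, j) \<in> RL R1 R2 R3 p"
proof -
  obtain t d where i: "i = prod_encode (t, d)" by (rule nat_decomp)
  obtain t' d' where j: "j = prod_encode (t', d')" by (rule nat_decomp)
  obtain s where s: "d = list_encode s" by (rule nat_decomp1)
  obtain s' where s': "d' = list_encode s'" by (rule nat_decomp1)
  obtain m u where mu: "d = prod_encode (m, list_encode u)" by (rule nat_decomp2)
  obtain m' u' where mu': "d' = prod_encode (m', list_encode u')" by (rule nat_decomp2)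
  have E': "(t = 0 \<and> t' = 0 \<and> pre d d' \<and> d \<noteq> d' \<and> gd R1 p d') \<or>
     (t = 2 \<and> t' = 2 \<and> m = m' \<and> pre (list_encode u) (list_encode u') \<and> u \<noteq> u' \<and> gd R1 p (list_encode u')) \<or>
     (t = 2 \<and> t' = 3 \<and> m = m' \<and> pre (list_encode u) (list_encode u')) \<or>
     (t = 0 \<and> t' = 3 \<and> pre d (takec (list_encode u') m')) \<or>
     (t = 3 \<and> t' = 3 \<and> d = d') \<or>
     (t = 4 \<and> t' = 4 \<and> pre d d' \<and> d \<noteq> d' \<and> gd R2 p d') \<or>
     (t = 5 \<and> t' = 5 \<and> pre d d' \<and> d \<noteq> d' \<and> gd R2 p d') \<or>
     (t = 4 \<and> t' = 6 \<and> pre d d') \<or>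
     (t = 5 \<and> t' = 6 \<and> pre d d') \<or>
     (t = 6 \<and> t' = 6 \<and> d = d') \<or>
     (t = 7 \<and> t' = 7 \<and> pre d d' \<and> d \<noteq> d' \<and> gd R3 p d') \<or>
     (t = 7 \<and> t' = 8) \<or>
     (t = 8 \<and> t' = 8 \<and> d = d') \<or>
     ((t = 1 \<or> 9 \<le> t) \<and> t' = t \<and> d = d')"
    using E unfolding Edge_def Let_def i j mu mu' by simp
  then show ?thesis
  proof (elim disjE conjE)
    assume "t = 0" "t' = 0" "pre d d'" "d \<noteq> d'" "gd R1 p d'"
    then show ?thesis unfolding i j s s' by (auto simp: sp_def intro: RL.eAe)
  next
    assume "t = 2" "t' = 2" "m = m'" "pre (list_encode u) (list_encode u')" "u \<noteq> u'" "gd R1 p (list_encode u')"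
    then show ?thesis unfolding i j mu mu' by (auto simp: sp_def intro: RL.fAf)
  next
    assume "t = 2" "t' = 3" "m = m'" "pre (list_encode u) (list_encode u')"
    then show ?thesis unfolding i j mu mu' by (auto intro: RL.fAb)
  next
    assume "t = 0" "t' = 3" "pre d (takec (list_encode u') m')"
    then show ?thesis unfolding i j s mu' by (auto intro: RL.eAb)
  next
    assume "t = 3" "t' = 3" "d = d'"
    then show ?thesis unfolding i j mu by (auto intro: RL.bAb)
  next
    assume "t = 4" "t' = 4" "pre d d'" "d \<noteq> d'" "gd R2 p d'"
    then show ?thesis unfolding i j s s' by (auto simp: sp_def intro: RL.e1e)
  next
    assume "t = 5" "t' = 5" "pre d d'" "d \<noteq> d'" "gd R2 p d'"
    then show ?thesis unfolding i j s s' by (auto simp: sp_def intro: RL.e2e)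
  next
    assume "t = 4" "t' = 6" "pre d d'"
    then show ?thesis unfolding i j s s' by (auto intro: RL.e1b)
  next
    assume "t = 5" "t' = 6" "pre d d'"
    then show ?thesis unfolding i j s s' by (auto intro: RL.e2b)
  next
    assume "t = 6" "t' = 6" "d = d'"
    then show ?thesis unfolding i j s by (auto intro: RL.bBb)
  next
    assume "t = 7" "t' = 7" "pre d d'" "d \<noteq> d'" "gd R3 p d'"
    then show ?thesis unfolding i j s s' by (auto simp: sp_def intro: RL.eCe)
  next
    assume "t = 7" "t' = 8"
    then show ?thesis unfolding i j s by (auto intro: RL.eCt)
  next
    assume "t = 8" "t' = 8" "d = d'"
    then show ?thesis unfolding i j by (auto intro: RL.tpt)
  next
    assume "t = 1" "t' = t" "d = d'"
    then show ?thesis unfolding i j by (auto intro: RL.jj)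
  next
    assume "9 \<le> t" "t' = t" "d = d'"
    then show ?thesis unfolding i j by (auto intro: RL.jj)
  qed
qed

lemma RL_iff_Edge: "(i, j) \<in> RL R1 R2 R3 p \<longleftrightarrow> Edge R1 R2 R3 p i j"
  using RL_Edge Edge_RL by blast


lemma cmp_tl: assumes P: "cmp k P" shows "cmp (Suc k) (\<lambda>ys. P (tl ys))"
proof -
  have "cmp (Suc k) (\<lambda>ys. P (map (\<lambda>i. (\<lambda>ys. ys ! Suc i) ys) [0..<k]))"
    by (rule cmp_comp[OF P]) (auto intro: cmp_proj)
  then show ?thesis
  proof (rule cmp_cong)
    fix ys :: "nat list" assume "length ys = Suc k"
    then have "map (\<lambda>i. ys ! Suc i) [0..<k] = tl ys"
      by (intro nth_equalityI) (auto simp: nth_tl)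
    then show "P (map (\<lambda>i. (\<lambda>ys. ys ! Suc i) ys) [0..<k]) = P (tl ys)" by simp
  qed
qed

lemma cmp_hd: "cmp (Suc k) hd"
proof (rule cmp_cong[OF cmp_proj[of 0 "Suc k"]])
  show "0 < Suc k" by simp
  fix xs :: "nat list" assume "length xs = Suc k"
  then have "xs \<noteq> []" by auto
  then show "xs ! 0 = hd xs" by (simp add: hd_conv_nth)
qed

lemma dec_pre: "cmp k A \<Longrightarrow> cmp k B \<Longrightarrow> dec k (\<lambda>xs. pre (A xs) (B xs))"
  unfolding pre_def by (intro dec_eq cmp_takec cmp_lenc)

lemma dec_gd:
  assumes R: "cmp 1 (\<lambda>xs. R (xs ! 0))" and P: "cmp k P" and C: "cmp k C"
  shows "dec k (\<lambda>xs. gd R (P xs) (C xs))"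
  unfolding gd_def
proof (rule dec_all_lt)
  show "dec (Suc k) (\<lambda>ys. R (prod_encode (P (tl ys), takec (C (tl ys)) (hd ys))) \<noteq> 0)"
    using cmp_comp1[OF R cmp_pe[OF cmp_tl[OF P] cmp_takec[OF cmp_tl[OF C] cmp_hd]]]
    by (intro dec_not dec_eq cmp_const) simp_all
  show "cmp k (\<lambda>xs. Suc (lenc (C xs)))" by (intro cmp_suc cmp_lenc C)
qed simp

lemma dec_Edge:
  assumes R1: "cmp 1 (\<lambda>xs. R1 (xs ! 0))" and R2: "cmp 1 (\<lambda>xs. R2 (xs ! 0))" and R3: "cmp 1 (\<lambda>xs. R3 (xs ! 0))"
  shows "dec 2 (\<lambda>xs. Edge R1 R2 R3 (xs ! 0) (fst (prod_decode (xs ! 1))) (snd (prod_decode (xs ! 1))))"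
  unfolding Edge_def Let_def
  by (intro dec_disj dec_conj dec_eq dec_le dec_not dec_pre dec_gd cmp_fst_pd cmp_snd_pd cmp_proj cmp_const
      cmp_takec R1 R2 R3; simp)

primrec cp :: "nat \<Rightarrow> recf" where
  "cp 0 = Z"
| "cp (Suc n) = Cn S [cp n]"

lemma eval_cp: "eval (cp n) xs n"
proof (induction n)
  case 0 then show ?case by (simp add: eval_Z)
next
  case (Suc n)
  show ?case by (simp, rule eval_Cn[where ys="[n]"]) (auto simp: Suc intro: eval_S)
qed

definition Qp :: "recf \<Rightarrow> nat \<Rightarrow> recf" where
  "Qp r p = Mn (Cn r [cp p, recf.Id 1])"

lemma W_Qp_1:
  assumes r: "\<forall>xs. length xs = 2 \<longrightarrow> eval r xs (if Pd (xs ! 0) (xs ! 1) then 0 else 1)"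
    and e: "eval (Qp r p) [x] y"
  shows "Pd p x"
proof -
  have r2: "eval r [a, b] (if Pd a b then 0 else 1)" for a b
    using r[rule_format, of "[a, b]"] by simp
  have "eval (Mn (Cn r [cp p, recf.Id 1])) [x] y" using e unfolding Qp_def by simp
  then have "eval (Cn r [cp p, recf.Id 1]) [y, x] 0" by (rule evalMn_E) simp
  then obtain ys where ys: "list_all2 (\<lambda>g z. eval g [y, x] z) [cp p, recf.Id 1] ys" "eval r ys 0"
    by (rule evalCn_E) simp
  then obtain a b where ab: "ys = [a, b]" "eval (cp p) [y, x] a" "eval (recf.Id 1) [y, x] b"
    by (auto simp: list_all2_Cons1)
  have "a = p" using eval_det[OF ab(2) eval_cp] .
  moreover have "b = x" using eval_det[OF ab(3) eval_Id[of 1 "[y, x]"]] by simp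
  ultimately have "eval r [p, x] 0" using ys(2) ab(1) by simp
  moreover have "eval r [p, x] (if Pd p x then 0 else 1)" by (rule r2)
  ultimately have "(if Pd p x then 0 else 1) = (0::nat)" using eval_det by metis
  then show "Pd p x" by (cases "Pd p x") simp_all
qed

lemma W_Qp_2:
  assumes r: "\<forall>xs. length xs = 2 \<longrightarrow> eval r xs (if Pd (xs ! 0) (xs ! 1) then 0 else 1)"
    and P: "Pd p x"
  shows "eval (Qp r p) [x] 0"
proof -
  have r2: "eval r [a, b] (if Pd a b then 0 else 1)" for a b
    using r[rule_format, of "[a, b]"] by simp
  have "eval (Cn r [cp p, recf.Id 1]) [0, x] 0"
  proof (rule eval_Cn[where ys="[p, x]"])
    show "list_all2 (\<lambda>g z. eval g [0, x] z) [cp p, recf.Id 1] [p, x]"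
      using eval_Id[of 1 "[0, x]"] by (auto simp: eval_cp)
    show "eval r [p, x] 0" using r2[of p x] P by simp
  qed
  then show "eval (Qp r p) [x] 0" unfolding Qp_def by (intro eval_Mn) simp_all
qed

lemma W_Qp:
  assumes r: "\<forall>xs. length xs = 2 \<longrightarrow> eval r xs (if Pd (xs ! 0) (xs ! 1) then 0 else 1)"
  shows "W (code (Qp r p)) = {x. Pd p x}"
  unfolding W_code using W_Qp_1[OF r] W_Qp_2[OF r] by blast

lemma cmp_code_cp: "cmp 1 (\<lambda>xs. code (cp (xs ! 0)))"
proof -
  have A: "cmp (Suc 0) (\<lambda>xs. prec (\<lambda>_. code Z)
      (\<lambda>ys. prod_encode (3, prod_encode (code S, Suc (prod_encode (ys ! 1, 0))))) (hd xs) (tl xs))"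
    by (intro cmp_Pr cmp_const cmp_pe cmp_suc cmp_proj) auto
  have B: "prec (\<lambda>_. code Z) (\<lambda>ys. prod_encode (3, prod_encode (code S, Suc (prod_encode (ys ! 1, 0))))) n []
     = code (cp n)" for n
    by (induction n) auto
  show ?thesis by (rule cmp_cong1[OF A], simp only: list.sel(1) list.sel(3) B, simp)
qed

lemma cmp_code_Qp: "cmp 1 (\<lambda>xs. code (Qp r (xs ! 0)))"
proof -
  have "cmp 1 (\<lambda>xs. prod_encode (5, prod_encode (3, prod_encode (code r,
      Suc (prod_encode (code (cp (xs ! 0)), Suc (prod_encode (code (recf.Id 1), 0))))))))"
    by (intro cmp_pe cmp_const cmp_suc cmp_comp1[OF cmp_code_cp, where G="\<lambda>xs. xs ! 0", simplified] cmp_proj) simp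
  then show ?thesis unfolding Qp_def by simp
qed


lemma computable_cmp: assumes "computable R" shows "cmp 1 (\<lambda>xs. R (xs ! 0))"
proof -
  obtain r where r: "\<And>x. eval r [x] (R x)" using assms unfolding computable_def by blast
  have "eval r xs (R (xs ! 0))" if l: "length xs = 1" for xs
  proof -
    obtain a where "xs = [a]" using l by (cases xs) auto
    then show ?thesis using r[of a] by simp
  qed
  then show ?thesis unfolding cmp_def by blast
qed

lemma cmp_computable: assumes "cmp 1 (\<lambda>xs. g (xs ! 0))" shows "computable g"
proof -
  obtain r where r: "\<And>xs. length xs = 1 \<Longrightarrow> eval r xs (g (xs ! 0))" using assms unfolding cmp_def by blast
  have "eval r [x] (g x)" for x using r[of "[x]"] by simp
  then show ?thesis unfolding computable_def by blast
qed

lemma pi11_path: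
  assumes A: "\<forall>n. n \<in> A \<longleftrightarrow> (\<forall>f::nat \<Rightarrow> nat. \<exists>m. R (prod_encode (n, list_encode (map f [0..<m]))) = 0)"
  shows "p \<in> A \<longleftrightarrow> \<not> (\<exists>f. ipath R p f)"
proof -
  have "p \<in> A \<longleftrightarrow> (\<forall>f::nat \<Rightarrow> nat. \<exists>m. R (prod_encode (p, list_encode (map f [0..<m]))) = 0)"
    using A by (rule spec)
  also have "\<dots> \<longleftrightarrow> \<not> (\<exists>f. ipath R p f)" unfolding ipath_def by auto
  finally show ?thesis .
qed

theorem theorem26:
  fixes M H F :: "nat set"
  assumes "pi11 M" and "pi11 H" and "pi11 F"
    and "M \<subseteq> H" and "H \<subseteq> F"
  shows "\<exists>g. computable g \<and> (\<forall>p. iota_ce (g p)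
     \<and> (p \<in> M \<longrightarrow> metrizable_space (iota (g p)))
     \<and> (p \<in> H - M \<longrightarrow> Hausdorff_space (iota (g p)) \<and> \<not> metrizable_space (iota (g p)))
     \<and> (p \<in> F - H \<longrightarrow> t1_space (iota (g p)) \<and> \<not> Hausdorff_space (iota (g p)))
     \<and> (p \<notin> F \<longrightarrow> \<not> t1_space (iota (g p))))"
proof -
  obtain RM where RMc: "computable RM" and RMs: "\<forall>n. n \<in> M \<longleftrightarrow> (\<forall>f::nat \<Rightarrow> nat. \<exists>m. RM (prod_encode (n, list_encode (map f [0..<m]))) = 0)"
    using assms(1) unfolding pi11_def by blast
  obtain RH where RHc: "computable RH" and RHs: "\<forall>n. n \<in> H \<longleftrightarrow> (\<forall>f::nat \<Rightarrow> nat. \<exists>m. RH (prod_encode (n, list_encode (map f [0..<m]))) = 0)"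
    using assms(2) unfolding pi11_def by blast
  obtain RF where RFc: "computable RF" and RFs: "\<forall>n. n \<in> F \<longleftrightarrow> (\<forall>f::nat \<Rightarrow> nat. \<exists>m. RF (prod_encode (n, list_encode (map f [0..<m]))) = 0)"
    using assms(3) unfolding pi11_def by blast
  have "dec 2 (\<lambda>xs. Edge RM RH RF (xs ! 0) (fst (prod_decode (xs ! 1))) (snd (prod_decode (xs ! 1))))"
    by (rule dec_Edge) (rule computable_cmp, fact)+
  then obtain r where r: "\<forall>xs. length xs = 2 \<longrightarrow> eval r xs
      (if Edge RM RH RF (xs ! 0) (fst (prod_decode (xs ! 1))) (snd (prod_decode (xs ! 1))) then 0 else 1)"
    unfolding dec_def cmp_def by blast
  define g where "g p = code (Qp r p)" for p
  have W: "W (g p) = {x. Edge RM RH RF p (fst (prod_decode x)) (snd (prod_decode x))}" for p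
    unfolding g_def
    by (rule W_Qp[where Pd="\<lambda>p x. Edge RM RH RF p (fst (prod_decode x)) (snd (prod_decode x))"]) (use r in simp)
  have V: "V (g p) = RL RM RH RF p" for p
  proof (rule set_eqI)
    fix z :: "nat \<times> nat"
    obtain i j where z: "z = (i, j)" by (cases z)
    show "z \<in> V (g p) \<longleftrightarrow> z \<in> RL RM RH RF p"
      unfolding z V_def W by (simp add: RL_iff_Edge)
  qed
  have T: "(V (g p))\<^sup>+ = RL RM RH RF p" for p
    unfolding V by (rule trancl_Rl)
  have gc: "computable g"
    unfolding g_def by (rule cmp_computable) (rule cmp_code_Qp)
  have ce: "iota_ce (g p)" for p
  proof -
    have "{k. basic_open ((V (g p))\<^sup>+) k \<noteq> {}} = UNIV"
      unfolding T using basic_nonempty by blast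
    moreover have "W (code Z) = UNIV" unfolding W_code by (auto intro: eval_Z)
    ultimately show ?thesis unfolding iota_ce_def ce_def by metis
  qed
  have io: "iota (g p) = ideal_space (RL RM RH RF p)" for p
    unfolding iota_def T ..
  have PM: "p \<in> M \<longleftrightarrow> \<not> (\<exists>f. ipath RM p f)" for p using pi11_path[OF RMs] .
  have PH: "p \<in> H \<longleftrightarrow> \<not> (\<exists>f. ipath RH p f)" for p using pi11_path[OF RHs] .
  have PF: "p \<in> F \<longleftrightarrow> \<not> (\<exists>f. ipath RF p f)" for p using pi11_path[OF RFs] .
  have main: "(p \<in> M \<longrightarrow> metrizable_space (iota (g p)))
     \<and> (p \<in> H - M \<longrightarrow> Hausdorff_space (iota (g p)) \<and> \<not> metrizable_space (iota (g p)))
     \<and> (p \<in> F - H \<longrightarrow> t1_space (iota (g p)) \<and> \<not> Hausdorff_space (iota (g p)))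
     \<and> (p \<notin> F \<longrightarrow> \<not> t1_space (iota (g p)))" for p
    unfolding io
  proof (intro conjI impI)
    assume pM: "p \<in> M"
    then have "p \<in> H" "p \<in> F" using assms(4,5) by auto
    then show "metrizable_space (ideal_space (RL RM RH RF p))"
      using pM PM PH PF by (intro discrete_case) auto
  next
    assume pHM: "p \<in> H - M"
    then have pF: "p \<in> F" using assms(5) by blast
    have a1: "\<not> (\<exists>f. ipath RH p f)" using pHM PH by blast
    have a2: "\<not> (\<exists>f. ipath RF p f)" using pF PF by blast
    have a3: "\<exists>f. ipath RM p f" using pHM PM by blast
    note a = a1 a2 a3
    show "Hausdorff_space (ideal_space (RL RM RH RF p))" using haus_case a(1,2) by blast
    obtain x where "ipath RM p x" using a(3) by blast
    then have "\<not> regular_space (ideal_space (RL RM RH RF p))" by (rule not_reg_case)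
    then show "\<not> metrizable_space (ideal_space (RL RM RH RF p))" using metrizable_imp_regular_space by blast
  next
    assume "p \<in> F - H"
    then have a: "\<not> (\<exists>f. ipath RF p f)" "\<exists>f. ipath RH p f"
      using PH PF by auto
    show "t1_space (ideal_space (RL RM RH RF p))" using t1_case a(1) by blast
    obtain x where "ipath RH p x" using a(2) by blast
    then show "\<not> Hausdorff_space (ideal_space (RL RM RH RF p))" by (rule not_haus_case)
  next
    assume "p \<notin> F"
    then obtain x where "ipath RF p x" using PF by auto
    then show "\<not> t1_space (ideal_space (RL RM RH RF p))" by (rule not_t1_case)
  qed
  show ?thesis using gc ce main by blast
qed

end
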